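(* Suppose that for every binary system $(S,\star)$ and every nonempty compact convex subset $C\subseteq\Pr(S)$ closed under $\star$ there is $\mu\in C$ with $\mu\star\mu=\mu$. Then: for every $c:\mathbb{T}\to[0,1]$ and $\epsilon>0$ there exist $r\in[0,1]$ and an increasing sequence $\mu_i$ ($i\in\omega$) of elements of $\mathbb{A}$ such that whenever $t\in\mathbb{T}_m$ and $i_0<\dots<i_{m-1}$ (natural numbers) is admissible for $t$, we have $|c(t(\mu_{i_0},\dots,\mu_{i_{m-1}}))-r|<\epsilon$.
   Context: For a set $S$, $\Pr(S)$ is the set of finitely additive probability measures on $S$, identified with positive linear functionals $f$ on $\ell^\infty(S)$ with $f(\bar1)=1$, with the weak* topology. For a binary operation $\star$ on $S$ and $\mu,\nu\in\Pr(S)$, $(\mu\star\nu)(f)=\int\int f(x\star y)\,d\nu(y)\,d\mu(x)$. For $a,b\subseteq(0,1]$ put $a\,\hat{}\,b=\tfrac12 a\cup\tfrac12(b+1)$; $\mathbb{T}$ is the set generated from $\mathbf{1}=\{1\}$ by $\hat{}$ (free binary system on one generator; each $t\neq\mathbf1$ is uniquely $a\,\hat{}\,b$). $\#(t)$ is the cardinality of $t$, $\mathbb{T}_n=\{t:\#(t)=n\}$, $\mathbb{A}_n$ is the set of probability measures on $\mathbb{T}_n$, $\mathbb{A}$ the disjoint union of the $\mathbb{A}_n$, $\#(\nu)=n$ for $\nu\in\mathbb{A}_n$; a sequence $\mu_i$ in $\mathbb{A}$ is increasing if $i<j$ implies $\#(\mu_i)<\#(\mu_j)$. $c$ is extended linearly: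 $c(\nu)=\sum_t\nu(\{t\})c(t)$. Substitution: for $t\in\mathbb{T}_m$ and $u_0,\dots,u_{m-1}\in\mathbb{T}$, $\mathbf1(u_0)=u_0$ and $(a\,\hat{}\,b)(u_0,\dots,u_{m-1})=a(u_0,\dots,u_{p-1})\,\hat{}\,b(u_p,\dots,u_{m-1})$ with $p=\#(a)$ (i.e. $u_i$ replaces the $i$-th occurrence of $\mathbf1$ in the term $t$); this extends $m$-multilinearly to a map $\mathbb{A}^m\to\mathbb{A}$. For $t\in\mathbb{T}$ and $k<\#(t)$ define $t_k$ recursively: $t_k=\mathbf1$ if $t=\mathbf1$, $k=0$; $t_k=a_k\,\hat{}\,\mathbf1$ if $t=a\,\hat{}\,b$ and $k<\#(a)$; $t_k=a\,\hat{}\,b_{k-\#(a)}$ if $t=a\,\hat{}\,b$ and $\#(a)\le k<\#(t)$. Let $l_k(t)=\#(t_k)-2$. For $t\in\mathbb{T}_m$, an increasing sequence $i_0<\dots<i_{m-1}$ is admissible for $t$ if $l_k(t)\le i_k$ for all $k<m$. *)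

theory Defs
  imports "HOL-Analysis.Analysis" "HOL-Probability.Probability_Mass_Function"
begin

definition linfty :: "'a set \<Rightarrow> ('a \<Rightarrow> real) set" where
  "linfty S = {f. (\<exists>B. \<forall>x\<in>S. \<bar>f x\<bar> \<le> B) \<and> (\<forall>x. x \<notin> S \<longrightarrow> f x = 0)}"

text \<open>Pr(S): positive linear functionals on ell-infinity(S) with value 1 at the
  constant function 1; normalised to be 0 outside ell-infinity(S), so that the product
  (pointwise) topology on the function space restricts to the weak* topology.\<close>
definition PrS :: "'a set \<Rightarrow> (('a \<Rightarrow> real) \<Rightarrow> real) set" where
  "PrS S = {\<phi>.
     (\<forall>f\<in>linfty S. \<forall>g\<in>linfty S. \<phi> (\<lambda>x. f x + g x) = \<phi> f + \<phi> g) \<and>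
     (\<forall>a. \<forall>f\<in>linfty S. \<phi> (\<lambda>x. a * f x) = a * \<phi> f) \<and>
     (\<forall>f\<in>linfty S. (\<forall>x\<in>S. 0 \<le> f x) \<longrightarrow> 0 \<le> \<phi> f) \<and>
     \<phi> (\<lambda>x. if x \<in> S then 1 else 0) = 1 \<and>
     (\<forall>f. f \<notin> linfty S \<longrightarrow> \<phi> f = 0)}"

definition conv :: "('a \<Rightarrow> 'a \<Rightarrow> 'a) \<Rightarrow> 'a set \<Rightarrow> (('a \<Rightarrow> real) \<Rightarrow> real)
                      \<Rightarrow> (('a \<Rightarrow> real) \<Rightarrow> real) \<Rightarrow> (('a \<Rightarrow> real) \<Rightarrow> real)" where
  "conv op S \<mu> \<nu> = (\<lambda>f. if f \<in> linfty S then
      \<mu> (\<lambda>x. if x \<in> S then \<nu> (\<lambda>y. if y \<in> S then f (op x y) else 0) else 0)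
    else 0)"

definition convex_fun_set :: "(('a \<Rightarrow> real) \<Rightarrow> real) set \<Rightarrow> bool" where
  "convex_fun_set C \<longleftrightarrow> (\<forall>\<mu>\<in>C. \<forall>\<nu>\<in>C. \<forall>u::real. 0 \<le> u \<and> u \<le> 1 \<longrightarrow>
      (\<lambda>f. u * \<mu> f + (1 - u) * \<nu> f) \<in> C)"

datatype T = One | Hat T T

fun card_T :: "T \<Rightarrow> nat" where
  "card_T One = 1"
| "card_T (Hat a b) = card_T a + card_T b"

fun subst :: "T \<Rightarrow> T list \<Rightarrow> T" where
  "subst One us = hd us"
| "subst (Hat a b) us = Hat (subst a (take (card_T a) us)) (subst b (drop (card_T a) us))"

definition in_A :: "nat \<Rightarrow> T pmf \<Rightarrow> bool" where
  "in_A n \<nu> \<longleftrightarrow> set_pmf \<nu> \<subseteq> {t. card_T t = n}"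

fun subst_A :: "T \<Rightarrow> T pmf list \<Rightarrow> T pmf" where
  "subst_A One \<nu>s = hd \<nu>s"
| "subst_A (Hat a b) \<nu>s = map_pmf (\<lambda>(x, y). Hat x y)
      (pair_pmf (subst_A a (take (card_T a) \<nu>s)) (subst_A b (drop (card_T a) \<nu>s)))"

definition c_A :: "(T \<Rightarrow> real) \<Rightarrow> T pmf \<Rightarrow> real" where
  "c_A c \<nu> = (\<Sum>t\<in>set_pmf \<nu>. pmf \<nu> t * c t)"

text \<open>t_k and l_k(t) = #(t_k) - 2 (an integer; equals -1 for t = 1).\<close>
fun sub_k :: "T \<Rightarrow> nat \<Rightarrow> T" where
  "sub_k One k = One"
| "sub_k (Hat a b) k = (if k < card_T a then Hat (sub_k a k) One
                        else Hat a (sub_k b (k - card_T a)))"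

definition l_k :: "nat \<Rightarrow> T \<Rightarrow> int" where
  "l_k k t = int (card_T (sub_k t k)) - 2"

definition admissible :: "T \<Rightarrow> nat list \<Rightarrow> bool" where
  "admissible t is \<longleftrightarrow> length is = card_T t \<and> sorted_wrt (<) is \<and>
     (\<forall>k < card_T t. l_k k t \<le> int (is ! k))"

end

theory Submission
  imports Defs
begin


definition ufilter :: "nat set set \<Rightarrow> bool" where
  "ufilter U \<longleftrightarrow> {} \<notin> U \<and> (\<forall>A B. A \<in> U \<longrightarrow> A \<subseteq> B \<longrightarrow> B \<in> U) \<and>
     (\<forall>A\<in>U. \<forall>B\<in>U. A \<inter> B \<in> U) \<and> (\<forall>A. A \<in> U \<or> - A \<in> U)"

definition fip :: "nat set set \<Rightarrow> bool" where
  "fip F \<longleftrightarrow> (\<forall>G. finite G \<longrightarrow> G \<subseteq> F \<longrightarrow> \<Inter>G \<noteq> {})"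

lemma ufilter_UNIV: "ufilter U \<Longrightarrow> UNIV \<in> U"
  unfolding ufilter_def by blast

lemma ufilter_compl: assumes "ufilter U" "A \<in> U" shows "- A \<notin> U"
proof
  assume "- A \<in> U"
  then have "A \<inter> - A \<in> U" using assms unfolding ufilter_def by blast
  then show False using assms unfolding ufilter_def by simp
qed

lemma ufilter_compl_iff: "ufilter U \<Longrightarrow> (- A \<in> U) \<longleftrightarrow> A \<notin> U"
  using ufilter_compl unfolding ufilter_def by blast

lemma ufilter_Inter: assumes "ufilter U" shows "finite G \<Longrightarrow> G \<subseteq> U \<Longrightarrow> \<Inter>G \<in> U"
proof (induction G rule: finite_induct)
  case empty then show ?case using ufilter_UNIV assms by simp
next
  case (insert x F) then show ?case using assms unfolding ufilter_def by auto
qed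

lemma ufilter_sub_eq: assumes "ufilter U" "ufilter V" "U \<subseteq> V" shows "U = V"
proof
  show "V \<subseteq> U"
  proof
    fix A assume "A \<in> V"
    show "A \<in> U"
    proof (rule ccontr)
      assume "A \<notin> U"
      then have "- A \<in> U" using assms(1) unfolding ufilter_def by blast
      then show False using assms ufilter_compl \<open>A \<in> V\<close> by blast
    qed
  qed
qed (use assms in auto)

lemma chain_bound:
  assumes ch: "\<forall>X\<in>C. \<forall>Y\<in>C. X \<subseteq> Y \<or> Y \<subseteq> X"
  shows "G \<subseteq> \<Union>C \<Longrightarrow> finite G \<Longrightarrow> C \<noteq> {} \<Longrightarrow> \<exists>X\<in>C. G \<subseteq> X"
proof (induction G rule: infinite_finite_induct)
  case (infinite A) then show ?case by simp
next
  case empty then show ?case by blast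
next
  case (insert x F)
  then obtain X where X: "X \<in> C" "F \<subseteq> X" by blast
  obtain Y where Y: "Y \<in> C" "x \<in> Y" using insert.prems by blast
  from ch X(1) Y(1) have "X \<subseteq> Y \<or> Y \<subseteq> X" by blast
  then show ?case
  proof
    assume "X \<subseteq> Y" then show ?thesis using X Y by blast
  next
    assume "Y \<subseteq> X" then show ?thesis using X Y by blast
  qed
qed

lemma fipD: "fip M \<Longrightarrow> finite G \<Longrightarrow> G \<subseteq> M \<Longrightarrow> \<Inter>G \<noteq> {}"
  unfolding fip_def by blast

lemma fipI: "(\<And>G. finite G \<Longrightarrow> G \<subseteq> M \<Longrightarrow> \<Inter>G \<noteq> {}) \<Longrightarrow> fip M"
  unfolding fip_def by blast

lemma fip_extend:
  assumes "fip F" shows "\<exists>U. ufilter U \<and> F \<subseteq> U"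
proof -
  let ?A = "{M. F \<subseteq> M \<and> fip M}"
  have "\<exists>M\<in>?A. \<forall>X\<in>?A. M \<subseteq> X \<longrightarrow> X = M"
  proof (rule Zorn_Lemma2, intro ballI)
    fix C assume C: "C \<in> chains ?A"
    have ch1: "\<forall>X\<in>C. \<forall>Y\<in>C. X \<subseteq> Y \<or> Y \<subseteq> X"
      using C unfolding chains_def chain_subset_def by simp
    have ch2: "\<And>X. X \<in> C \<Longrightarrow> F \<subseteq> X \<and> fip X"
      using C unfolding chains_def by auto
    have "fip (F \<union> \<Union>C)"
    proof (rule fipI)
      fix G assume G: "finite G" "G \<subseteq> F \<union> \<Union>C"
      show "\<Inter>G \<noteq> {}"
      proof (cases "G \<subseteq> F")
        case True then show ?thesis using fipD[OF assms G(1)] by simp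
      next
        case False
        have "G - F \<subseteq> \<Union>C" using G by blast
        moreover have "finite (G - F)" using G by simp
        moreover have "C \<noteq> {}" using G False by blast
        ultimately obtain X where X: "X \<in> C" "G - F \<subseteq> X" using chain_bound[OF ch1] by blast
        have "F \<subseteq> X" "fip X" using ch2[OF X(1)] by auto
        then have "G \<subseteq> X" using X(2) by blast
        then show ?thesis using fipD[OF \<open>fip X\<close> G(1)] by simp
      qed
    qed
    then have "F \<union> \<Union>C \<in> ?A" by simp
    moreover have "\<forall>X\<in>C. X \<subseteq> F \<union> \<Union>C" by blast
    ultimately show "\<exists>U\<in>?A. \<forall>X\<in>C. X \<subseteq> U" by blast
  qed
  then obtain M where Mm: "M \<in> ?A" and Mmax: "\<forall>X\<in>?A. M \<subseteq> X \<longrightarrow> X = M"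
    by (rule bexE)
  from Mm have M: "F \<subseteq> M" "fip M" by simp_all
  have ins: "A \<in> M" if "fip (insert A M)" for A
  proof -
    have "insert A M \<in> ?A" using that M(1) by auto
    then have "insert A M = M" using Mmax by auto
    then show ?thesis by auto
  qed
  have "ufilter M"
    unfolding ufilter_def
  proof (intro conjI allI impI ballI)
    show "{} \<notin> M"
    proof
      assume "{} \<in> M"
      then have "finite {{}}" "{{}} \<subseteq> M" by auto
      from fipD[OF M(2) this] show False by simp
    qed
  next
    fix A B assume AB: "A \<in> M" "A \<subseteq> B"
    show "B \<in> M"
    proof (rule ins, rule fipI)
      fix G assume G: "finite G" "G \<subseteq> insert B M"
      have "finite (insert A (G - {B}))" using G by simp
      moreover have "insert A (G - {B}) \<subseteq> M" using G AB by blast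
      ultimately have "\<Inter>(insert A (G - {B})) \<noteq> {}" using fipD[OF M(2)] by blast
      moreover have "\<Inter>(insert A (G - {B})) \<subseteq> \<Inter>G" using AB by blast
      ultimately show "\<Inter>G \<noteq> {}" by blast
    qed
  next
    fix A B assume AB: "A \<in> M" "B \<in> M"
    show "A \<inter> B \<in> M"
    proof (rule ins, rule fipI)
      fix G assume G: "finite G" "G \<subseteq> insert (A \<inter> B) M"
      have "finite (insert A (insert B (G - {A \<inter> B})))" using G by simp
      moreover have "insert A (insert B (G - {A \<inter> B})) \<subseteq> M" using G AB by blast
      ultimately have "\<Inter>(insert A (insert B (G - {A \<inter> B}))) \<noteq> {}" using fipD[OF M(2)] by blast
      moreover have "\<Inter>(insert A (insert B (G - {A \<inter> B}))) \<subseteq> \<Inter>G" by blast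
      ultimately show "\<Inter>G \<noteq> {}" by blast
    qed
  next
    fix A
    show "A \<in> M \<or> - A \<in> M"
    proof (rule ccontr)
      assume nA: "\<not> (A \<in> M \<or> - A \<in> M)"
      then have "\<not> fip (insert A M)" using ins by blast
      then obtain G1 where G1: "finite G1" "G1 \<subseteq> insert A M" "\<Inter>G1 = {}" unfolding fip_def by blast
      have "\<not> fip (insert (- A) M)" using ins nA by blast
      then obtain G2 where G2: "finite G2" "G2 \<subseteq> insert (- A) M" "\<Inter>G2 = {}" unfolding fip_def by blast
      let ?G = "(G1 - {A}) \<union> (G2 - {- A})"
      have "finite ?G" using G1 G2 by simp
      moreover have "G1 - {A} \<subseteq> M" using G1(2) by blast
      moreover have "G2 - {- A} \<subseteq> M" using G2(2) by blast
      ultimately have "finite ?G" "?G \<subseteq> M" by auto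
      then have "\<Inter>?G \<noteq> {}" by (rule fipD[OF M(2)])
      then obtain z where z: "z \<in> \<Inter>?G" by (meson ex_in_conv)
      show False
      proof (cases "z \<in> A")
        case True
        have "z \<in> Y" if "Y \<in> G1" for Y
        proof (cases "Y = A")
          case True then show ?thesis using \<open>z \<in> A\<close> by simp
        next
          case False then have "Y \<in> ?G" using that by simp
          then show ?thesis by (rule InterD[OF z])
        qed
        then have "z \<in> \<Inter>G1" by (rule InterI)
        then show False using G1 by simp
      next
        case False
        have "z \<in> Y" if "Y \<in> G2" for Y
        proof (cases "Y = - A")
          case True then show ?thesis using \<open>z \<notin> A\<close> by simp
        next
          case False then have "Y \<in> ?G" using that by simp
          then show ?thesis by (rule InterD[OF z])
        qed
        then have "z \<in> \<Inter>G2" by (rule InterI)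
        then show False using G2 by simp
      qed
    qed
  qed
  then show ?thesis using M by blast
qed

lemma uf_empty: "ufilter U \<Longrightarrow> {} \<notin> U"
  unfolding ufilter_def by blast
lemma uf_mono: "ufilter U \<Longrightarrow> A \<in> U \<Longrightarrow> A \<subseteq> B \<Longrightarrow> B \<in> U"
  unfolding ufilter_def by blast
lemma uf_int: "ufilter U \<Longrightarrow> A \<in> U \<Longrightarrow> B \<in> U \<Longrightarrow> A \<inter> B \<in> U"
  unfolding ufilter_def by blast
lemma uf_ultra: "ufilter U \<Longrightarrow> A \<notin> U \<Longrightarrow> - A \<in> U"
  unfolding ufilter_def by blast
lemma ufilterI:
  "{} \<notin> U \<Longrightarrow> (\<And>A B. A \<in> U \<Longrightarrow> A \<subseteq> B \<Longrightarrow> B \<in> U) \<Longrightarrow> (\<And>A B. A \<in> U \<Longrightarrow> B \<in> U \<Longrightarrow> A \<inter> B \<in> U)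
   \<Longrightarrow> (\<And>A. A \<notin> U \<Longrightarrow> - A \<in> U) \<Longrightarrow> ufilter U"
  unfolding ufilter_def by blast

definition uplus :: "nat set set \<Rightarrow> nat set set \<Rightarrow> nat set set" where
  "uplus U V = {A. {n. {m. n + m \<in> A} \<in> V} \<in> U}"

lemma uplus_iff: "A \<in> uplus U V \<longleftrightarrow> {n. {m. n + m \<in> A} \<in> V} \<in> U"
  unfolding uplus_def by simp

lemma ufilter_uplus:
  assumes U: "ufilter U" and V: "ufilter V" shows "ufilter (uplus U V)"
proof (rule ufilterI)
  have "{n. {m. n + m \<in> ({}::nat set)} \<in> V} = {}" using uf_empty[OF V] by simp
  then show "{} \<notin> uplus U V" unfolding uplus_iff using uf_empty[OF U] by simp
next
  fix A B assume A: "A \<in> uplus U V" and AB: "A \<subseteq> B"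
  have "{n. {m. n + m \<in> A} \<in> V} \<subseteq> {n. {m. n + m \<in> B} \<in> V}"
  proof
    fix n assume "n \<in> {n. {m. n + m \<in> A} \<in> V}"
    then have "{m. n + m \<in> A} \<in> V" by simp
    moreover have "{m. n + m \<in> A} \<subseteq> {m. n + m \<in> B}" using AB by auto
    ultimately have "{m. n + m \<in> B} \<in> V" by (rule uf_mono[OF V])
    then show "n \<in> {n. {m. n + m \<in> B} \<in> V}" by simp
  qed
  then show "B \<in> uplus U V" using A uf_mono[OF U] unfolding uplus_iff by blast
next
  fix A B assume A: "A \<in> uplus U V" and B: "B \<in> uplus U V"
  have "{n. {m. n + m \<in> A} \<in> V} \<inter> {n. {m. n + m \<in> B} \<in> V} \<subseteq> {n. {m. n + m \<in> A \<inter> B} \<in> V}"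
  proof
    fix n assume "n \<in> {n. {m. n + m \<in> A} \<in> V} \<inter> {n. {m. n + m \<in> B} \<in> V}"
    then have "{m. n + m \<in> A} \<in> V" "{m. n + m \<in> B} \<in> V" by auto
    then have "{m. n + m \<in> A} \<inter> {m. n + m \<in> B} \<in> V" by (rule uf_int[OF V])
    moreover have "{m. n + m \<in> A} \<inter> {m. n + m \<in> B} = {m. n + m \<in> A \<inter> B}" by auto
    ultimately show "n \<in> {n. {m. n + m \<in> A \<inter> B} \<in> V}" by simp
  qed
  moreover have "{n. {m. n + m \<in> A} \<in> V} \<inter> {n. {m. n + m \<in> B} \<in> V} \<in> U"
    using A B uf_int[OF U] unfolding uplus_iff by blast
  ultimately show "A \<inter> B \<in> uplus U V" using uf_mono[OF U] unfolding uplus_iff by blast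
next
  fix A assume "A \<notin> uplus U V"
  then have "- {n. {m. n + m \<in> A} \<in> V} \<in> U" using uf_ultra[OF U] unfolding uplus_iff by blast
  moreover have "- {n. {m. n + m \<in> A} \<in> V} = {n. {m. n + m \<in> - A} \<in> V}"
  proof -
    have "{m. n + m \<in> - A} = - {m. n + m \<in> A}" for n by auto
    then show ?thesis using ufilter_compl_iff[OF V] by auto
  qed
  ultimately show "- A \<in> uplus U V" unfolding uplus_iff by simp
qed

lemma uplus_assoc: "uplus (uplus U V) W = uplus U (uplus V W)"
  unfolding uplus_def by (simp add: add.assoc)

definition uclosed :: "nat set set set \<Rightarrow> bool" where
  "uclosed K \<longleftrightarrow> (\<forall>p\<in>K. ufilter p) \<and> (\<forall>p. ufilter p \<longrightarrow> (\<forall>A\<in>p. \<exists>q\<in>K. A \<in> q) \<longrightarrow> p \<in> K)"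

lemma uclosedD1: "uclosed K \<Longrightarrow> p \<in> K \<Longrightarrow> ufilter p"
  unfolding uclosed_def by blast
lemma uclosedD2: "uclosed K \<Longrightarrow> ufilter p \<Longrightarrow> (\<And>A. A \<in> p \<Longrightarrow> \<exists>q\<in>K. A \<in> q) \<Longrightarrow> p \<in> K"
  unfolding uclosed_def by blast
lemma uclosedI: "(\<And>p. p \<in> K \<Longrightarrow> ufilter p) \<Longrightarrow> (\<And>p. ufilter p \<Longrightarrow> (\<forall>A\<in>p. \<exists>q\<in>K. A \<in> q) \<Longrightarrow> p \<in> K) \<Longrightarrow> uclosed K"
  unfolding uclosed_def by blast

lemma ucompact:
  assumes cl: "\<And>K. K \<in> KK \<Longrightarrow> uclosed K"
    and ne: "\<And>GG. finite GG \<Longrightarrow> GG \<subseteq> KK \<Longrightarrow> GG \<noteq> {} \<Longrightarrow> \<Inter>GG \<noteq> {}"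
    and KKne: "KK \<noteq> {}"
  shows "\<Inter>KK \<noteq> {}"
proof -
  define F where "F = {A. \<exists>K\<in>KK. \<forall>q\<in>K. A \<in> q}"
  have "fip F"
  proof (rule fipI)
    fix G assume G: "finite G" "G \<subseteq> F"
    then have "\<forall>A\<in>G. \<exists>K. K \<in> KK \<and> (\<forall>q\<in>K. A \<in> q)" unfolding F_def by blast
    then obtain f where f: "\<And>A. A \<in> G \<Longrightarrow> f A \<in> KK \<and> (\<forall>q\<in>f A. A \<in> q)" by metis
    obtain K0 where K0: "K0 \<in> KK" using KKne by blast
    have "finite (insert K0 (f ` G))" using G by simp
    moreover have "insert K0 (f ` G) \<subseteq> KK" using f K0 by blast
    ultimately have "\<Inter>(insert K0 (f ` G)) \<noteq> {}" using ne by blast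
    then obtain q where q: "q \<in> \<Inter>(insert K0 (f ` G))" by (meson ex_in_conv)
    then have q1: "q \<in> K0" by simp
    have "A \<in> q" if "A \<in> G" for A
    proof -
      have "q \<in> f A" using q that by simp
      then show ?thesis using f[OF that] by blast
    qed
    then have Gq: "G \<subseteq> q" by blast
    have uq: "ufilter q" using cl[OF K0] q1 by (rule uclosedD1)
    have "\<Inter>G \<in> q" by (rule ufilter_Inter[OF uq G(1) Gq])
    then show "\<Inter>G \<noteq> {}" using uf_empty[OF uq] by metis
  qed
  then obtain p where p: "ufilter p" "F \<subseteq> p" using fip_extend by blast
  have "p \<in> K" if K: "K \<in> KK" for K
  proof (rule uclosedD2[OF cl[OF K] p(1)])
    fix A assume A: "A \<in> p"
    show "\<exists>q\<in>K. A \<in> q"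
    proof (rule ccontr)
      assume "\<not> (\<exists>q\<in>K. A \<in> q)"
      then have "\<forall>q\<in>K. - A \<in> q" using uf_ultra uclosedD1[OF cl[OF K]] by blast
      then have "- A \<in> F" unfolding F_def using K by blast
      then have "- A \<in> p" using p by blast
      then show False using A p ufilter_compl by blast
    qed
  qed
  then show ?thesis by blast
qed

definition Hinf :: "nat set set set" where
  "Hinf = {p. ufilter p \<and> (\<forall>N. {n. N \<le> n} \<in> p)}"

definition usemi :: "nat set set set \<Rightarrow> bool" where
  "usemi M \<longleftrightarrow> (\<forall>p\<in>M. \<forall>q\<in>M. uplus p q \<in> M)"

lemma uclosed_Hinf: "uclosed Hinf"
proof (rule uclosedI)
  fix p assume "p \<in> Hinf" then show "ufilter p" unfolding Hinf_def by simp
next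
  fix p assume p: "ufilter p" and h: "\<forall>A\<in>p. \<exists>q\<in>Hinf. A \<in> q"
  have "{n. N \<le> n} \<in> p" for N
  proof (rule ccontr)
    assume "{n. N \<le> n} \<notin> p"
    then have "- {n. N \<le> n} \<in> p" using uf_ultra[OF p] by blast
    then obtain q where "q \<in> Hinf" "- {n. N \<le> n} \<in> q" using h by blast
    then have "ufilter q" "{n. N \<le> n} \<in> q" "- {n. N \<le> n} \<in> q" unfolding Hinf_def by auto
    then show False using ufilter_compl by blast
  qed
  then show "p \<in> Hinf" unfolding Hinf_def using p by simp
qed

lemma usemi_Hinf: "usemi Hinf"
  unfolding usemi_def
proof (intro ballI)
  fix p q assume "p \<in> Hinf" "q \<in> Hinf"
  then have p: "ufilter p" and q: "ufilter q" "\<And>N. {n. N \<le> n} \<in> q" unfolding Hinf_def by auto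
  have "{n. N \<le> n} \<in> uplus p q" for N
  proof -
    have "{n. {m. n + m \<in> {n. N \<le> n}} \<in> q} = UNIV"
    proof -
      have "{m. N \<le> m} \<subseteq> {m. n + m \<in> {n. N \<le> n}}" for n by auto
      then have "{m. n + m \<in> {n. N \<le> n}} \<in> q" for n using uf_mono[OF q(1) q(2)] by blast
      then show ?thesis by blast
    qed
    then show ?thesis unfolding uplus_iff using ufilter_UNIV[OF p] by simp
  qed
  then show "uplus p q \<in> Hinf" unfolding Hinf_def using ufilter_uplus[OF p q(1)] by simp
qed

lemma Hinf_ne: "Hinf \<noteq> {}"
proof -
  have "fip (range (\<lambda>N. {n::nat. N \<le> n}))"
  proof (rule fipI)
    fix G assume G: "finite G" "G \<subseteq> range (\<lambda>N::nat. {n. N \<le> n})"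
    then obtain NS where NS: "finite NS" "G = (\<lambda>N. {n. N \<le> n}) ` NS"
      by (meson finite_subset_image)
    have "Max (insert 0 NS) \<in> \<Inter>G" using NS by auto
    then show "\<Inter>G \<noteq> {}" by blast
  qed
  then obtain p where "ufilter p" "range (\<lambda>N. {n. N \<le> n}) \<subseteq> p" using fip_extend by blast
  then have "p \<in> Hinf" unfolding Hinf_def by auto
  then show ?thesis by blast
qed

lemma uclosed_Inter: assumes "KK \<noteq> {}" "\<And>K. K \<in> KK \<Longrightarrow> uclosed K" shows "uclosed (\<Inter>KK)"
proof (rule uclosedI)
  fix p assume "p \<in> \<Inter>KK"
  then show "ufilter p" using assms uclosedD1 by blast
next
  fix p assume p: "ufilter p" "\<forall>A\<in>p. \<exists>q\<in>\<Inter>KK. A \<in> q"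
  have "p \<in> K" if "K \<in> KK" for K
    using uclosedD2[OF assms(2)[OF that] p(1)] p(2) that by blast
  then show "p \<in> \<Inter>KK" by blast
qed

lemma uclosed_Int: assumes "uclosed K" "uclosed L" shows "uclosed (K \<inter> L)"
proof -
  have "uclosed (\<Inter>{K, L})" by (rule uclosed_Inter) (use assms in auto)
  then show ?thesis by simp
qed

lemma uclosed_basic: "uclosed {q. ufilter q \<and> B \<in> q}"
proof (rule uclosedI)
  fix p assume p: "ufilter p" "\<forall>A\<in>p. \<exists>q\<in>{q. ufilter q \<and> B \<in> q}. A \<in> q"
  have "B \<in> p"
  proof (rule ccontr)
    assume "B \<notin> p"
    then have "- B \<in> p" using uf_ultra[OF p(1)] by blast
    then obtain q where "ufilter q" "B \<in> q" "- B \<in> q" using p(2) by blast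
    then show False using ufilter_compl by blast
  qed
  then show "p \<in> {q. ufilter q \<and> B \<in> q}" using p by simp
qed simp


lemma chain_min:
  assumes ch: "\<forall>X\<in>C. \<forall>Y\<in>C. X \<subseteq> Y \<or> Y \<subseteq> X"
  shows "finite GG \<Longrightarrow> GG \<subseteq> C \<Longrightarrow> GG \<noteq> {} \<Longrightarrow> \<exists>K\<in>GG. \<forall>L\<in>GG. K \<subseteq> L"
proof (induction GG rule: finite_induct)
  case empty then show ?case by simp
next
  case (insert x F)
  show ?case
  proof (cases "F = {}")
    case True then show ?thesis by simp
  next
    case False
    have "F \<subseteq> C" using insert.prems by simp
    then obtain K where K: "K \<in> F" "\<forall>L\<in>F. K \<subseteq> L" using insert.IH False by blast
    have "x \<in> C" "K \<in> C" using insert.prems K(1) by auto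
    then have "x \<subseteq> K \<or> K \<subseteq> x" using ch by blast
    then show ?thesis
    proof
      assume xK: "x \<subseteq> K"
      have "\<forall>L\<in>insert x F. x \<subseteq> L" using xK K(2) by auto
      then show ?thesis by blast
    next
      assume Kx: "K \<subseteq> x"
      have "\<forall>L\<in>insert x F. K \<subseteq> L" using Kx K(2) by auto
      then show ?thesis using K(1) by blast
    qed
  qed
qed

lemma minimal_semi:
  obtains M where "M \<noteq> {}" "uclosed M" "usemi M" "M \<subseteq> Hinf"
      "\<And>X. X \<noteq> {} \<Longrightarrow> uclosed X \<Longrightarrow> usemi X \<Longrightarrow> X \<subseteq> M \<Longrightarrow> X = M"
proof -
  define MM where "MM = {M. M \<noteq> {} \<and> uclosed M \<and> usemi M \<and> M \<subseteq> Hinf}"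
  let ?A = "uminus ` MM"
  have "\<exists>M\<in>?A. \<forall>X\<in>?A. M \<subseteq> X \<longrightarrow> X = M"
  proof (rule Zorn_Lemma2, intro ballI)
    fix C assume C: "C \<in> chains ?A"
    show "\<exists>U\<in>?A. \<forall>X\<in>C. X \<subseteq> U"
    proof (cases "C = {}")
      case True
      have "Hinf \<in> MM" unfolding MM_def using Hinf_ne uclosed_Hinf usemi_Hinf by simp
      then show ?thesis using True by blast
    next
      case False
      define D where "D = uminus ` C"
      have CA: "C \<subseteq> ?A" using C unfolding chains_def by simp
      have DM: "D \<subseteq> MM"
      proof
        fix X assume "X \<in> D"
        then obtain Y where "Y \<in> C" "X = - Y" unfolding D_def by blast
        then obtain Z where "Z \<in> MM" "Y = - Z" using CA by blast
        then show "X \<in> MM" using \<open>X = - Y\<close> by simp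
      qed
      have chC: "\<forall>X\<in>C. \<forall>Y\<in>C. X \<subseteq> Y \<or> Y \<subseteq> X"
        using C unfolding chains_def chain_subset_def by simp
      have ch: "\<forall>X\<in>D. \<forall>Y\<in>D. X \<subseteq> Y \<or> Y \<subseteq> X"
        unfolding D_def using chC by auto
      have Dne: "D \<noteq> {}" unfolding D_def using False by simp
      have Dprop: "\<And>X. X \<in> D \<Longrightarrow> X \<noteq> {} \<and> uclosed X \<and> usemi X \<and> X \<subseteq> Hinf"
        using DM unfolding MM_def by blast
      have I1: "\<Inter>D \<noteq> {}"
      proof (rule ucompact)
        show "uclosed K" if "K \<in> D" for K using Dprop[OF that] by simp
        show "D \<noteq> {}" by (rule Dne)
        fix GG assume GG: "finite GG" "GG \<subseteq> D" "GG \<noteq> {}"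
        obtain K where K: "K \<in> GG" "\<forall>L\<in>GG. K \<subseteq> L" using chain_min[OF ch GG] by blast
        have "K \<noteq> {}" using Dprop K(1) GG(2) by blast
        then show "\<Inter>GG \<noteq> {}" using K(2) by blast
      qed
      have I2: "uclosed (\<Inter>D)" by (rule uclosed_Inter[OF Dne]) (use Dprop in blast)
      have I3: "usemi (\<Inter>D)" unfolding usemi_def
      proof (intro ballI InterI)
        fix p q X assume "p \<in> \<Inter>D" "q \<in> \<Inter>D" "X \<in> D"
        then have "p \<in> X" "q \<in> X" "usemi X" using Dprop by auto
        then show "uplus p q \<in> X" unfolding usemi_def by blast
      qed
      have I4: "\<Inter>D \<subseteq> Hinf" using Dprop Dne by blast
      have "\<Inter>D \<in> MM" unfolding MM_def using I1 I2 I3 I4 by blast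
      then have "- \<Inter>D \<in> ?A" by blast
      moreover have "\<forall>X\<in>C. X \<subseteq> - \<Inter>D" unfolding D_def by auto
      ultimately show ?thesis by blast
    qed
  qed
  then obtain M' where M'1: "M' \<in> ?A" and M'2: "\<forall>X\<in>?A. M' \<subseteq> X \<longrightarrow> X = M'" by (rule bexE)
  define M where "M = - M'"
  have M: "M \<in> MM" using M'1 M_def by auto
  have Mp: "M \<noteq> {}" "uclosed M" "usemi M" "M \<subseteq> Hinf" using M unfolding MM_def by simp_all
  have "X = M" if X: "X \<noteq> {}" "uclosed X" "usemi X" "X \<subseteq> M" for X
  proof -
    have "X \<subseteq> Hinf" using X(4) Mp(4) by (rule subset_trans)
    then have "X \<in> MM" using X unfolding MM_def by simp
    then have XA: "- X \<in> ?A" by (rule imageI)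
    have XM: "M' \<subseteq> - X" using X(4) M_def by auto
    have "- X = M'" using bspec[OF M'2 XA] XM by simp
    then show ?thesis using M_def by auto
  qed
  then show ?thesis using that[OF Mp(1) Mp(2) Mp(3) Mp(4)] by blast
qed

lemma idempotent_ultrafilter:
  "\<exists>U. ufilter U \<and> (\<forall>N. {n. N \<le> n} \<in> U) \<and> uplus U U = U"
proof -
  obtain M where M: "M \<noteq> {}" "uclosed M" "usemi M" "M \<subseteq> Hinf"
    and minM: "\<And>X. X \<noteq> {} \<Longrightarrow> uclosed X \<Longrightarrow> usemi X \<Longrightarrow> X \<subseteq> M \<Longrightarrow> X = M"
    by (rule minimal_semi) blast
  obtain x where x: "x \<in> M" using M(1) by blast
  have Mu: "\<And>p. p \<in> M \<Longrightarrow> ufilter p" using uclosedD1[OF M(2)] by blast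
  have xu: "ufilter x" using Mu x by blast
  have Msemi: "\<And>p q. p \<in> M \<Longrightarrow> q \<in> M \<Longrightarrow> uplus p q \<in> M" using M(3) unfolding usemi_def by blast
  define Mx where "Mx = (\<lambda>q. uplus q x) ` M"
  have Mx_sub: "Mx \<subseteq> M" unfolding Mx_def using Msemi x by blast
  have Mx_ne: "Mx \<noteq> {}" unfolding Mx_def using x by blast
  have Mx_semi: "usemi Mx" unfolding usemi_def
  proof (intro ballI)
    fix a b assume "a \<in> Mx" "b \<in> Mx"
    then obtain q q' where q: "q \<in> M" "a = uplus q x" and q': "q' \<in> M" "b = uplus q' x"
      unfolding Mx_def by blast
    have "uplus (uplus q x) q' \<in> M" using Msemi q q' x by blast
    moreover have "uplus a b = uplus (uplus (uplus q x) q') x"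
      using q q' by (simp add: uplus_assoc)
    ultimately show "uplus a b \<in> Mx" unfolding Mx_def by blast
  qed
  have Mx_closed: "uclosed Mx"
  proof (rule uclosedI)
    fix p assume "p \<in> Mx" then show "ufilter p" using Mx_sub Mu by blast
  next
    fix p assume p: "ufilter p" and h: "\<forall>A\<in>p. \<exists>q\<in>Mx. A \<in> q"
    define tl where "tl A = {n. {m. n + m \<in> A} \<in> x}" for A
    define KK where "KK = (\<lambda>A. M \<inter> {q. ufilter q \<and> tl A \<in> q}) ` p"
    have "\<Inter>KK \<noteq> {}"
    proof (rule ucompact)
      show "uclosed K" if "K \<in> KK" for K
        using that M(2) uclosed_Int uclosed_basic unfolding KK_def by blast
      show "KK \<noteq> {}" unfolding KK_def using p ufilter_UNIV by blast
      fix GG assume GG: "finite GG" "GG \<subseteq> KK" "GG \<noteq> {}"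
      then obtain AS where AS: "finite AS" "AS \<subseteq> p" "GG = (\<lambda>A. M \<inter> {q. ufilter q \<and> tl A \<in> q}) ` AS"
        using finite_subset_image[OF GG(1) GG(2)[unfolded KK_def]] by blast
      have "\<Inter>AS \<in> p" by (rule ufilter_Inter[OF p AS(1) AS(2)])
      then obtain a where a: "a \<in> Mx" "\<Inter>AS \<in> a" using h by blast
      then obtain q where q: "q \<in> M" "a = uplus q x" unfolding Mx_def by blast
      have uq: "ufilter q" using Mu q(1) by blast
      have "\<Inter>AS \<in> uplus q x" using a q by simp
      then have tq: "tl (\<Inter>AS) \<in> q" by (simp only: uplus_iff tl_def)
      have "tl A \<in> q" if "A \<in> AS" for A
      proof -
        have "tl (\<Inter>AS) \<subseteq> tl A"
        proof
          fix n assume "n \<in> tl (\<Inter>AS)"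
          then have "{m. n + m \<in> \<Inter>AS} \<in> x" unfolding tl_def by simp
          moreover have "{m. n + m \<in> \<Inter>AS} \<subseteq> {m. n + m \<in> A}" using that by auto
          ultimately have "{m. n + m \<in> A} \<in> x" by (rule uf_mono[OF xu])
          then show "n \<in> tl A" unfolding tl_def by simp
        qed
        then show ?thesis by (rule uf_mono[OF uq tq])
      qed
      then have "q \<in> \<Inter>GG" using AS(3) q(1) uq by blast
      then show "\<Inter>GG \<noteq> {}" by blast
    qed
    then obtain q where q: "q \<in> \<Inter>KK" by (meson ex_in_conv)
    have qM: "q \<in> M" using q ufilter_UNIV[OF p] unfolding KK_def by blast
    have "p \<subseteq> uplus q x"
    proof
      fix A assume "A \<in> p"
      then have "tl A \<in> q" using q unfolding KK_def by blast
      then show "A \<in> uplus q x" unfolding uplus_iff tl_def by simp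
    qed
    then have "p = uplus q x" using ufilter_sub_eq[OF p ufilter_uplus[OF Mu[OF qM] xu]] by blast
    then show "p \<in> Mx" unfolding Mx_def using qM by blast
  qed
  have Mx: "Mx = M" by (rule minM[OF Mx_ne Mx_closed Mx_semi Mx_sub])
  define E where "E = M \<inter> {q. ufilter q \<and> uplus q x = x}"
  have E_ne: "E \<noteq> {}"
  proof -
    have "x \<in> Mx" using Mx x by simp
    then obtain q where "q \<in> M" "x = uplus q x" unfolding Mx_def by blast
    then show ?thesis unfolding E_def using Mu by force
  qed
  have E_semi: "usemi E" unfolding usemi_def E_def
  proof (intro ballI)
    fix p q assume p: "p \<in> M \<inter> {q. ufilter q \<and> uplus q x = x}" and q: "q \<in> M \<inter> {q. ufilter q \<and> uplus q x = x}"
    have "uplus (uplus p q) x = x" using p q by (simp add: uplus_assoc)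
    moreover have "uplus p q \<in> M" using p q Msemi by blast
    ultimately show "uplus p q \<in> M \<inter> {q. ufilter q \<and> uplus q x = x}" using Mu by blast
  qed
  have "uclosed {q. ufilter q \<and> uplus q x = x}"
  proof (rule uclosedI)
    fix p assume p: "ufilter p" and h: "\<forall>A\<in>p. \<exists>q\<in>{q. ufilter q \<and> uplus q x = x}. A \<in> q"
    have "x \<subseteq> uplus p x"
    proof
      fix A assume A: "A \<in> x"
      show "A \<in> uplus p x"
      proof (rule ccontr)
        assume "A \<notin> uplus p x"
        then have "- {n. {m. n + m \<in> A} \<in> x} \<in> p" using uf_ultra[OF p] unfolding uplus_iff by blast
        then obtain q where q: "ufilter q" "uplus q x = x" "- {n. {m. n + m \<in> A} \<in> x} \<in> q" using h by blast
        then have "A \<notin> uplus q x" unfolding uplus_iff using ufilter_compl by blast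
        then show False using q A by simp
      qed
    qed
    then have "x = uplus p x" using ufilter_sub_eq[OF xu ufilter_uplus[OF p xu]] by blast
    then show "p \<in> {q. ufilter q \<and> uplus q x = x}" using p by simp
  qed simp
  then have E_closed: "uclosed E" unfolding E_def using uclosed_Int[OF M(2)] by blast
  have "E \<subseteq> M" unfolding E_def by blast
  then have "E = M" using minM E_ne E_closed E_semi by blast
  then have "uplus x x = x" using x unfolding E_def by blast
  moreover have "x \<in> Hinf" using M(4) x by blast
  ultimately show ?thesis unfolding Hinf_def using xu by blast
qed


type_synonym fn = "(T \<Rightarrow> real) \<Rightarrow> real"

definition bdd :: "(T \<Rightarrow> real) \<Rightarrow> bool" where
  "bdd g \<longleftrightarrow> (\<exists>B. \<forall>x. \<bar>g x\<bar> \<le> B)"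

definition mean :: "fn \<Rightarrow> bool" where
  "mean \<alpha> \<longleftrightarrow> (\<forall>g B. (\<forall>x. \<bar>g x\<bar> \<le> B) \<longrightarrow> \<bar>\<alpha> g\<bar> \<le> B)"

definition dlt :: "T \<Rightarrow> fn" where
  "dlt x = (\<lambda>g. g x)"

lemma mean_dlt: "mean (dlt x)"
  unfolding mean_def dlt_def by blast

lemma card_T_pos: "1 \<le> card_T t"
  by (induction t) auto

fun ev :: "T \<Rightarrow> fn list \<Rightarrow> (T \<Rightarrow> real) \<Rightarrow> real" where
  "ev One as g = hd as g"
| "ev (Hat a b) as g = ev a (take (card_T a) as) (\<lambda>x. ev b (drop (card_T a) as) (\<lambda>y. g (Hat x y)))"

lemma ev_bound:
  "(\<forall>\<alpha>\<in>set as. mean \<alpha>) \<Longrightarrow> length as = card_T t \<Longrightarrow> (\<forall>x. \<bar>g x\<bar> \<le> B) \<Longrightarrow> \<bar>ev t as g\<bar> \<le> B"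
proof (induction t arbitrary: as g)
  case One
  then obtain \<alpha> where "as = [\<alpha>]" by (cases as) auto
  then show ?case using One unfolding mean_def by simp
next
  case (Hat a b)
  have "\<forall>x. \<bar>ev b (drop (card_T a) as) (\<lambda>y. g (Hat x y))\<bar> \<le> B"
  proof
    fix x
    show "\<bar>ev b (drop (card_T a) as) (\<lambda>y. g (Hat x y))\<bar> \<le> B"
      by (rule Hat.IH(2)) (use Hat.prems in \<open>auto dest: in_set_dropD\<close>)
  qed
  moreover have "\<forall>\<alpha>\<in>set (take (card_T a) as). mean \<alpha>" using Hat.prems(1) by (auto dest: in_set_takeD)
  ultimately show ?case using Hat.IH(1)[of "take (card_T a) as"] Hat.prems by simp
qed


lemma ev_points: "length xs = card_T t \<Longrightarrow> ev t (map dlt xs) g = g (subst t xs)"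
proof (induction t arbitrary: xs g)
  case One
  then obtain x where "xs = [x]" by (cases xs) auto
  then show ?case by (simp add: dlt_def)
next
  case (Hat a b)
  have "ev (Hat a b) (map dlt xs) g
      = ev a (map dlt (take (card_T a) xs)) (\<lambda>x. ev b (map dlt (drop (card_T a) xs)) (\<lambda>y. g (Hat x y)))"
    by (simp add: take_map drop_map)
  also have "\<dots> = ev a (map dlt (take (card_T a) xs)) (\<lambda>x. g (Hat x (subst b (drop (card_T a) xs))))"
    using Hat.IH(2) Hat.prems by simp
  also have "\<dots> = g (subst (Hat a b) xs)"
    using Hat.IH(1) Hat.prems by simp
  finally show ?case .
qed

locale idem_mean =
  fixes m :: fn
  assumes m_mean: "mean m"
    and m_idem: "\<And>g. bdd g \<Longrightarrow> m g = m (\<lambda>x. m (\<lambda>y. g (Hat x y)))"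
begin

lemma bdd_Hat: "bdd g \<Longrightarrow> bdd (\<lambda>y. g (Hat x y))"
  unfolding bdd_def by blast

lemma bdd_m: "bdd (\<lambda>x. m (f x))" if "\<And>x. \<forall>y. \<bar>f x y\<bar> \<le> B" for f B
  unfolding bdd_def using m_mean that unfolding mean_def by blast

lemma ev_all_m: "bdd g \<Longrightarrow> ev t (replicate (card_T t) m) g = m g"
proof (induction t arbitrary: g)
  case One then show ?case by simp
next
  case (Hat a b)
  obtain B where B: "\<forall>x. \<bar>g x\<bar> \<le> B" using Hat.prems unfolding bdd_def by blast
  have "ev (Hat a b) (replicate (card_T (Hat a b)) m) g
     = ev a (replicate (card_T a) m) (\<lambda>x. ev b (replicate (card_T b) m) (\<lambda>y. g (Hat x y)))"
    by (simp add: replicate_add)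
  also have "\<dots> = ev a (replicate (card_T a) m) (\<lambda>x. m (\<lambda>y. g (Hat x y)))"
    using Hat.IH(2) bdd_Hat[OF Hat.prems] by simp
  also have "\<dots> = m (\<lambda>x. m (\<lambda>y. g (Hat x y)))"
    by (rule Hat.IH(1), rule bdd_m[of _ B]) (use B in auto)
  also have "\<dots> = m g" using m_idem[OF Hat.prems] by simp
  finally show ?case .
qed

lemma take_app_rep: "length ys \<le> n \<Longrightarrow> take n (ys @ replicate N z) = ys @ replicate (min (n - length ys) N) z"
  by simp

lemma drop_app_rep: "length ys \<le> n \<Longrightarrow> drop n (ys @ replicate N z) = replicate (N - (n - length ys)) z"
  by simp

lemma bdd_ev: "(\<And>x. \<forall>\<alpha>\<in>set (as x). mean \<alpha>) \<Longrightarrow> (\<And>x. length (as x) = card_T t) \<Longrightarrow> (\<And>x y. \<bar>G x y\<bar> \<le> B)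
   \<Longrightarrow> bdd (\<lambda>x. ev t (as x) (G x))"
  unfolding bdd_def using ev_bound by blast

lemma mean_list: "\<forall>\<alpha>\<in>set (map dlt xs @ replicate n m). mean \<alpha>"
  using m_mean mean_dlt by auto

lemma ev_step:
  "length xs < card_T t \<Longrightarrow> bdd g \<Longrightarrow>
   ev t (map dlt xs @ replicate (card_T t - length xs) m) g
     = m (\<lambda>x. ev t (map dlt (xs @ [x]) @ replicate (card_T t - Suc (length xs)) m) g)"
proof (induction t arbitrary: xs g)
  case One
  then have "xs = []" by simp
  then show ?case by (simp add: dlt_def)
next
  case (Hat a b)
  obtain B where B: "\<forall>x. \<bar>g x\<bar> \<le> B" using Hat.prems unfolding bdd_def by blast
  define ca where "ca = card_T a"
  define cb where "cb = card_T b"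
  define k where "k = length xs"
  have ct: "card_T (Hat a b) = ca + cb" unfolding ca_def cb_def by simp
  show ?case
  proof (cases "k < ca")
    case True
    define h where "h = (\<lambda>x'. ev b (replicate cb m) (\<lambda>y. g (Hat x' y)))"
    have bh: "bdd h" unfolding h_def
      by (rule bdd_ev[where B=B]) (use m_mean B cb_def in auto)
    have e1: "take ca (map dlt xs @ replicate (ca + cb - k) m) = map dlt xs @ replicate (ca - k) m"
      using True by (simp add: k_def)
    have e2: "drop ca (map dlt xs @ replicate (ca + cb - k) m) = replicate cb m"
      using True by (simp add: k_def)
    have e3: "take ca (map dlt (xs @ [x]) @ replicate (ca + cb - Suc k) m) = map dlt (xs @ [x]) @ replicate (ca - Suc k) m" for x
    proof -
      have "length (map dlt (xs @ [x])) \<le> ca" using True by (simp add: k_def)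
      from take_app_rep[OF this] show ?thesis using True by (simp add: k_def min_def del: map_append)
    qed
    have e4: "drop ca (map dlt (xs @ [x]) @ replicate (ca + cb - Suc k) m) = replicate cb m" for x
    proof -
      have "length (map dlt (xs @ [x])) \<le> ca" using True by (simp add: k_def)
      from drop_app_rep[OF this] show ?thesis using True by (simp add: k_def del: map_append)
    qed
    have "ev (Hat a b) (map dlt xs @ replicate (card_T (Hat a b) - length xs) m) g
        = ev a (map dlt xs @ replicate (ca - k) m) h"
      unfolding ct k_def[symmetric] by (simp only: ev.simps ca_def[symmetric] e1 e2 h_def)
    also have "\<dots> = m (\<lambda>x. ev a (map dlt (xs @ [x]) @ replicate (ca - Suc k) m) h)"
      using Hat.IH(1)[OF _ bh] True unfolding k_def ca_def by simp
    also have "\<dots> = m (\<lambda>x. ev (Hat a b) (map dlt (xs @ [x]) @ replicate (card_T (Hat a b) - Suc (length xs)) m) g)"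
      unfolding ct k_def[symmetric] by (simp only: ev.simps ca_def[symmetric] e3 e4 h_def)
    finally show ?thesis .
  next
    case False
    define s where "s = subst a (take ca xs)"
    have lt: "length (take ca xs) = card_T a" using False unfolding k_def ca_def by simp
    have ld: "length (drop ca xs) < card_T b" using False Hat.prems(1) unfolding k_def ca_def by simp
    have e1: "take ca (map dlt xs @ replicate (ca + cb - k) m) = map dlt (take ca xs)"
      using False by (simp add: k_def take_map)
    have e2: "drop ca (map dlt xs @ replicate (ca + cb - k) m) = map dlt (drop ca xs) @ replicate (cb - length (drop ca xs)) m"
      using False by (simp add: k_def drop_map)
    have e3: "take ca (map dlt (xs @ [x]) @ replicate (ca + cb - Suc k) m) = map dlt (take ca xs)" for x
      using False by (simp add: k_def take_map)
    have e4: "drop ca (map dlt (xs @ [x]) @ replicate (ca + cb - Suc k) m) = map dlt (drop ca xs @ [x]) @ replicate (cb - Suc (length (drop ca xs))) m" for x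
      using False Hat.prems(1) by (simp add: k_def drop_map ca_def cb_def Suc_diff_le)
    have "ev (Hat a b) (map dlt xs @ replicate (card_T (Hat a b) - length xs) m) g
        = ev a (map dlt (take ca xs)) (\<lambda>x'. ev b (map dlt (drop ca xs) @ replicate (cb - length (drop ca xs)) m) (\<lambda>y. g (Hat x' y)))"
      unfolding ct k_def[symmetric] by (simp only: ev.simps ca_def[symmetric] e1 e2)
    also have "\<dots> = ev b (map dlt (drop ca xs) @ replicate (cb - length (drop ca xs)) m) (\<lambda>y. g (Hat s y))"
      using ev_points[OF lt] unfolding s_def by simp
    also have "\<dots> = m (\<lambda>x. ev b (map dlt (drop ca xs @ [x]) @ replicate (cb - Suc (length (drop ca xs))) m) (\<lambda>y. g (Hat s y)))"
      using Hat.IH(2)[OF ld bdd_Hat[OF Hat.prems(2)]] unfolding cb_def by simp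
    also have "\<dots> = m (\<lambda>x. ev a (map dlt (take ca xs)) (\<lambda>x'. ev b (map dlt (drop ca xs @ [x]) @ replicate (cb - Suc (length (drop ca xs))) m) (\<lambda>y. g (Hat x' y))))"
      using ev_points[OF lt] unfolding s_def by simp
    also have "\<dots> = m (\<lambda>x. ev (Hat a b) (map dlt (xs @ [x]) @ replicate (card_T (Hat a b) - Suc (length xs)) m) g)"
      unfolding ct k_def[symmetric] by (simp only: ev.simps ca_def[symmetric] e3 e4)
    finally show ?thesis .
  qed
qed

end

lemma card_sub_k: "k < card_T t \<Longrightarrow> Suc k \<le> card_T (sub_k t k)"
proof (induction t arbitrary: k)
  case One then show ?case by simp
next
  case (Hat a b)
  show ?case
  proof (cases "k < card_T a")
    case True then show ?thesis using Hat.IH(1)[of k] by simp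
  next
    case False
    have "k - card_T a < card_T b" using Hat.prems False by simp
    then show ?thesis using Hat.IH(2)[of "k - card_T a"] False by simp
  qed
qed

context idem_mean begin

lemma ev_collapse:
  "k < card_T t \<Longrightarrow> length pre = Suc k \<Longrightarrow> (\<forall>\<alpha>\<in>set pre. mean \<alpha>) \<Longrightarrow> bdd g \<Longrightarrow>
   ev t (pre @ replicate (card_T t - Suc k) m) g = ev (sub_k t k) (pre @ replicate (card_T (sub_k t k) - Suc k) m) g"
proof (induction t arbitrary: k pre g)
  case One then show ?case by simp
next
  case (Hat a b)
  obtain B where B: "\<forall>x. \<bar>g x\<bar> \<le> B" using Hat.prems unfolding bdd_def by blast
  define ca where "ca = card_T a"
  define cb where "cb = card_T b"
  have ct: "card_T (Hat a b) = ca + cb" unfolding ca_def cb_def by simp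
  show ?case
  proof (cases "k < ca")
    case True
    define a' where "a' = sub_k a k"
    define ca' where "ca' = card_T a'"
    have ca': "Suc k \<le> ca'" using card_sub_k[of k a] True unfolding ca'_def a'_def ca_def by simp
    have sk: "sub_k (Hat a b) k = Hat a' One" using True unfolding a'_def ca_def by simp
    define h where "h = (\<lambda>x'. m (\<lambda>y. g (Hat x' y)))"
    have bh: "bdd h" unfolding h_def by (rule bdd_m[where B=B]) (use B in auto)
    have "ev (Hat a b) (pre @ replicate (card_T (Hat a b) - Suc k) m) g
        = ev a (pre @ replicate (ca - Suc k) m) (\<lambda>x'. ev b (replicate cb m) (\<lambda>y. g (Hat x' y)))"
      using True Hat.prems(2) by (simp add: ca_def cb_def)
    also have "\<dots> = ev a (pre @ replicate (ca - Suc k) m) h"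
      unfolding h_def cb_def using ev_all_m bdd_Hat[OF Hat.prems(4)] by simp
    also have "\<dots> = ev a' (pre @ replicate (ca' - Suc k) m) h"
      using Hat.IH(1)[OF _ Hat.prems(2) Hat.prems(3) bh] True unfolding a'_def ca'_def ca_def by simp
    also have "\<dots> = ev (sub_k (Hat a b) k) (pre @ replicate (card_T (sub_k (Hat a b) k) - Suc k) m) g"
      unfolding sk using ca' Hat.prems(2) by (simp add: ca'_def h_def Suc_diff_le)
    finally show ?thesis .
  next
    case False
    define k' where "k' = k - ca"
    define b' where "b' = sub_k b k'"
    have sk: "sub_k (Hat a b) k = Hat a b'" using False unfolding b'_def k'_def ca_def by simp
    have k'b: "k' < cb" using False Hat.prems(1) unfolding k'_def ca_def cb_def by simp
    have lp: "length (drop ca pre) = Suc k'" using False Hat.prems(2) unfolding k'_def by simp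
    have mp: "\<forall>\<alpha>\<in>set (drop ca pre). mean \<alpha>" using Hat.prems(3) by (auto dest: in_set_dropD)
    have eq: "ca + cb - Suc k = cb - Suc k'" using False unfolding k'_def by simp
    have "ev (Hat a b) (pre @ replicate (card_T (Hat a b) - Suc k) m) g
        = ev a (take ca pre) (\<lambda>x'. ev b (drop ca pre @ replicate (ca + cb - Suc k) m) (\<lambda>y. g (Hat x' y)))"
      using False Hat.prems(2) by (simp add: ca_def cb_def)
    also have "\<dots> = ev a (take ca pre) (\<lambda>x'. ev b (drop ca pre @ replicate (cb - Suc k') m) (\<lambda>y. g (Hat x' y)))"
      unfolding eq ..
    also have "\<dots> = ev a (take ca pre) (\<lambda>x'. ev b' (drop ca pre @ replicate (card_T b' - Suc k') m) (\<lambda>y. g (Hat x' y)))"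
      using Hat.IH(2)[OF _ lp mp bdd_Hat[OF Hat.prems(4)]] k'b unfolding b'_def cb_def by simp
    also have "\<dots> = ev a (take ca pre) (\<lambda>x'. ev b' (drop ca pre @ replicate (ca + card_T b' - Suc k) m) (\<lambda>y. g (Hat x' y)))"
    proof -
      have "card_T b' - Suc k' = ca + card_T b' - Suc k" using False unfolding k'_def by simp
      then show ?thesis by simp
    qed
    also have "\<dots> = ev (sub_k (Hat a b) k) (pre @ replicate (card_T (sub_k (Hat a b) k) - Suc k) m) g"
      unfolding sk using False Hat.prems(2) by (simp add: ca_def)
    finally show ?thesis .
  qed
qed

end


fun Ep :: "T pmf list \<Rightarrow> (T list \<Rightarrow> real) \<Rightarrow> real" where
  "Ep [] F = F []"
| "Ep (\<nu> # \<nu>s) F = (\<Sum>x\<in>set_pmf \<nu>. pmf \<nu> x * Ep \<nu>s (\<lambda>ys. F (x # ys)))"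

definition valid :: "T list \<Rightarrow> T pmf list \<Rightarrow> bool" where
  "valid xs \<nu>s \<longleftrightarrow> list_all2 (\<lambda>x \<nu>. x \<in> set_pmf \<nu>) xs \<nu>s"

lemma valid_Nil[simp]: "valid xs [] \<longleftrightarrow> xs = []"
  unfolding valid_def by simp

lemma valid_Cons[simp]: "valid xs (\<nu> # \<nu>s) \<longleftrightarrow> (\<exists>x ys. xs = x # ys \<and> x \<in> set_pmf \<nu> \<and> valid ys \<nu>s)"
  unfolding valid_def by (cases xs) auto

lemma valid_length: "valid xs \<nu>s \<Longrightarrow> length xs = length \<nu>s"
  unfolding valid_def by (rule list_all2_lengthD)

lemma valid_nth: "valid xs \<nu>s \<Longrightarrow> j < length xs \<Longrightarrow> xs ! j \<in> set_pmf (\<nu>s ! j)"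
  unfolding valid_def by (simp add: list_all2_conv_all_nth)

lemma Ep_cong: "(\<And>xs. valid xs \<nu>s \<Longrightarrow> F xs = G xs) \<Longrightarrow> Ep \<nu>s F = Ep \<nu>s G"
proof (induction \<nu>s arbitrary: F G)
  case Nil then show ?case by simp
next
  case (Cons \<nu> \<nu>s)
  show ?case
  proof (simp, rule sum.cong[OF refl])
    fix x assume x: "x \<in> set_pmf \<nu>"
    have "Ep \<nu>s (\<lambda>ys. F (x # ys)) = Ep \<nu>s (\<lambda>ys. G (x # ys))"
      by (rule Cons.IH) (use Cons.prems x in auto)
    then show "pmf \<nu> x * Ep \<nu>s (\<lambda>ys. F (x # ys)) = pmf \<nu> x * Ep \<nu>s (\<lambda>ys. G (x # ys))" by simp
  qed
qed

definition fin_all :: "T pmf list \<Rightarrow> bool" where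
  "fin_all \<nu>s \<longleftrightarrow> (\<forall>\<nu>\<in>set \<nu>s. finite (set_pmf \<nu>))"

lemma Ep_bound: "fin_all \<nu>s \<Longrightarrow> (\<And>xs. valid xs \<nu>s \<Longrightarrow> \<bar>F xs\<bar> \<le> B) \<Longrightarrow> \<bar>Ep \<nu>s F\<bar> \<le> B"
proof (induction \<nu>s arbitrary: F)
  case Nil then show ?case by simp
next
  case (Cons \<nu> \<nu>s)
  have fin: "finite (set_pmf \<nu>)" and fa: "fin_all \<nu>s" using Cons.prems unfolding fin_all_def by auto
  have b: "\<bar>Ep \<nu>s (\<lambda>ys. F (x # ys))\<bar> \<le> B" if "x \<in> set_pmf \<nu>" for x
    by (rule Cons.IH[OF fa]) (use Cons.prems that in auto)
  have "\<bar>Ep (\<nu> # \<nu>s) F\<bar> \<le> (\<Sum>x\<in>set_pmf \<nu>. \<bar>pmf \<nu> x * Ep \<nu>s (\<lambda>ys. F (x # ys))\<bar>)"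
    by (simp add: sum_abs)
  also have "\<dots> \<le> (\<Sum>x\<in>set_pmf \<nu>. pmf \<nu> x * B)"
    by (rule sum_mono) (use b in \<open>auto simp: abs_mult intro: mult_left_mono\<close>)
  also have "\<dots> = B" using sum_pmf_eq_1[OF fin order_refl] by (simp add: sum_distrib_right[symmetric])
  finally show ?case .
qed

lemma Ep_diff: "Ep \<nu>s F - Ep \<nu>s G = Ep \<nu>s (\<lambda>xs. F xs - G xs)"
proof (induction \<nu>s arbitrary: F G)
  case Nil then show ?case by simp
next
  case (Cons \<nu> \<nu>s)
  show ?case by (simp add: sum_subtractf[symmetric] right_diff_distrib[symmetric] Cons.IH)
qed

lemma Ep_snoc: "Ep (\<nu>s @ [\<nu>]) F = Ep \<nu>s (\<lambda>xs. \<Sum>x\<in>set_pmf \<nu>. pmf \<nu> x * F (xs @ [x]))"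
  by (induction \<nu>s arbitrary: F) auto

lemma Ep_append: "Ep (\<nu>s @ \<mu>s) F = Ep \<nu>s (\<lambda>xs. Ep \<mu>s (\<lambda>ys. F (xs @ ys)))"
  by (induction \<nu>s arbitrary: F) auto

lemma sum_pair_Hat:
  assumes "finite (set_pmf A)" "finite (set_pmf B)"
  shows "finite (set_pmf (map_pmf (\<lambda>(x, y). Hat x y) (pair_pmf A B)))"
    "(\<Sum>s\<in>set_pmf (map_pmf (\<lambda>(x, y). Hat x y) (pair_pmf A B)). pmf (map_pmf (\<lambda>(x, y). Hat x y) (pair_pmf A B)) s * g s)
     = (\<Sum>x\<in>set_pmf A. pmf A x * (\<Sum>y\<in>set_pmf B. pmf B y * g (Hat x y)))"
proof -
  let ?f = "\<lambda>(x, y). Hat x y"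
  have inj: "inj ?f" by (auto simp: inj_def)
  show "finite (set_pmf (map_pmf ?f (pair_pmf A B)))" using assms by simp
  have "(\<Sum>s\<in>set_pmf (map_pmf ?f (pair_pmf A B)). pmf (map_pmf ?f (pair_pmf A B)) s * g s)
      = (\<Sum>z\<in>set_pmf A \<times> set_pmf B. pmf (map_pmf ?f (pair_pmf A B)) (?f z) * g (?f z))"
    by (simp add: sum.reindex[OF inj_on_subset[OF inj subset_UNIV]])
  also have "\<dots> = (\<Sum>z\<in>set_pmf A \<times> set_pmf B. pmf A (fst z) * pmf B (snd z) * g (?f z))"
  proof (rule sum.cong[OF refl])
    fix z :: "T \<times> T"
    have "pmf (map_pmf ?f (pair_pmf A B)) (?f z) = pmf (pair_pmf A B) z" by (rule pmf_map_inj'[OF inj])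
    also have "\<dots> = pmf A (fst z) * pmf B (snd z)" by (cases z) (simp add: pmf_pair)
    finally show "pmf (map_pmf ?f (pair_pmf A B)) (?f z) * g (?f z) = pmf A (fst z) * pmf B (snd z) * g (?f z)" by simp
  qed
  also have "\<dots> = (\<Sum>(x, y)\<in>set_pmf A \<times> set_pmf B. pmf A x * pmf B y * g (Hat x y))"
    by (rule sum.cong) auto
  also have "\<dots> = (\<Sum>x\<in>set_pmf A. pmf A x * (\<Sum>y\<in>set_pmf B. pmf B y * g (Hat x y)))"
    by (simp add: sum.cartesian_product[symmetric] sum_distrib_left mult.assoc)
  finally show "(\<Sum>s\<in>set_pmf (map_pmf ?f (pair_pmf A B)). pmf (map_pmf ?f (pair_pmf A B)) s * g s)
     = (\<Sum>x\<in>set_pmf A. pmf A x * (\<Sum>y\<in>set_pmf B. pmf B y * g (Hat x y)))" .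
qed

lemma Ep_subst:
  "fin_all \<nu>s \<Longrightarrow> length \<nu>s = card_T t \<Longrightarrow>
   finite (set_pmf (subst_A t \<nu>s)) \<and>
   Ep \<nu>s (\<lambda>xs. g (subst t xs)) = (\<Sum>s\<in>set_pmf (subst_A t \<nu>s). pmf (subst_A t \<nu>s) s * g s)"
proof (induction t arbitrary: \<nu>s g)
  case One
  then obtain \<nu> where "\<nu>s = [\<nu>]" by (cases \<nu>s) auto
  then show ?case using One by (simp add: fin_all_def)
next
  case (Hat a b)
  define ca where "ca = card_T a"
  define A where "A = subst_A a (take ca \<nu>s)"
  define B where "B = subst_A b (drop ca \<nu>s)"
  have fa: "fin_all (take ca \<nu>s)" "fin_all (drop ca \<nu>s)"
    using Hat.prems(1) unfolding fin_all_def by (auto dest: in_set_takeD in_set_dropD)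
  have la: "length (take ca \<nu>s) = card_T a" "length (drop ca \<nu>s) = card_T b"
    using Hat.prems(2) unfolding ca_def by auto
  have IHa: "finite (set_pmf A)" "\<And>g. Ep (take ca \<nu>s) (\<lambda>xs. g (subst a xs)) = (\<Sum>s\<in>set_pmf A. pmf A s * g s)"
    using Hat.IH(1)[OF fa(1) la(1)] unfolding A_def by auto
  have IHb: "finite (set_pmf B)" "\<And>g. Ep (drop ca \<nu>s) (\<lambda>xs. g (subst b xs)) = (\<Sum>s\<in>set_pmf B. pmf B s * g s)"
    using Hat.IH(2)[OF fa(2) la(2)] unfolding B_def by auto
  have sA: "subst_A (Hat a b) \<nu>s = map_pmf (\<lambda>(x, y). Hat x y) (pair_pmf A B)"
    unfolding A_def B_def ca_def by simp
  have "Ep \<nu>s (\<lambda>xs. g (subst (Hat a b) xs))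
      = Ep (take ca \<nu>s @ drop ca \<nu>s) (\<lambda>xs. g (subst (Hat a b) xs))" by simp
  also have "\<dots> = Ep (take ca \<nu>s) (\<lambda>xs. Ep (drop ca \<nu>s) (\<lambda>ys. g (subst (Hat a b) (xs @ ys))))"
    by (rule Ep_append)
  also have "\<dots> = Ep (take ca \<nu>s) (\<lambda>xs. Ep (drop ca \<nu>s) (\<lambda>ys. g (Hat (subst a xs) (subst b ys))))"
  proof (rule Ep_cong)
    fix xs assume "valid xs (take ca \<nu>s)"
    then have "length xs = ca" using valid_length la unfolding ca_def by simp
    then show "Ep (drop ca \<nu>s) (\<lambda>ys. g (subst (Hat a b) (xs @ ys))) = Ep (drop ca \<nu>s) (\<lambda>ys. g (Hat (subst a xs) (subst b ys)))"
      unfolding ca_def by simp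
  qed
  also have "\<dots> = Ep (take ca \<nu>s) (\<lambda>xs. \<Sum>y\<in>set_pmf B. pmf B y * g (Hat (subst a xs) y))"
    by (intro arg_cong[where f="Ep (take ca \<nu>s)"] ext IHb(2))
  also have "\<dots> = (\<Sum>x\<in>set_pmf A. pmf A x * (\<Sum>y\<in>set_pmf B. pmf B y * g (Hat x y)))"
    using IHa(2)[of "\<lambda>x. \<Sum>y\<in>set_pmf B. pmf B y * g (Hat x y)"] by simp
  also have "\<dots> = (\<Sum>s\<in>set_pmf (subst_A (Hat a b) \<nu>s). pmf (subst_A (Hat a b) \<nu>s) s * g s)"
    unfolding sA using sum_pair_Hat(2)[OF IHa(1) IHb(1)] by simp
  finally have eq: "Ep \<nu>s (\<lambda>xs. g (subst (Hat a b) xs)) = (\<Sum>s\<in>set_pmf (subst_A (Hat a b) \<nu>s). pmf (subst_A (Hat a b) \<nu>s) s * g s)" .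
  have "finite (set_pmf (subst_A (Hat a b) \<nu>s))" unfolding sA by (rule sum_pair_Hat(1)[OF IHa(1) IHb(1)])
  then show ?case using eq by blast
qed

lemma Ep_c_A: "fin_all \<nu>s \<Longrightarrow> length \<nu>s = card_T t \<Longrightarrow> Ep \<nu>s (\<lambda>xs. c (subst t xs)) = c_A c (subst_A t \<nu>s)"
  using Ep_subst[of \<nu>s t c] unfolding c_A_def by simp


lemma finite_pmf_exists:
  fixes w :: "T \<Rightarrow> real"
  assumes "finite A" "\<And>x. x \<in> A \<Longrightarrow> 0 \<le> w x" "sum w A = 1"
  shows "\<exists>\<nu>. \<forall>x. pmf \<nu> x = (if x \<in> A then w x else 0)"
proof -
  define f where "f x = (if x \<in> A then w x else 0)" for x
  have nn: "\<And>x. 0 \<le> f x" unfolding f_def using assms(2) by auto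
  have "(\<integral>\<^sup>+x. ennreal (f x) \<partial>count_space UNIV) = (\<Sum>x\<in>A. ennreal (f x))"
    by (rule nn_integral_count_space') (use assms(1) in \<open>auto simp: f_def\<close>)
  also have "\<dots> = ennreal (\<Sum>x\<in>A. f x)" by (rule sum_ennreal) (use nn in auto)
  also have "(\<Sum>x\<in>A. f x) = 1" using assms(3) unfolding f_def by simp
  finally have "(\<integral>\<^sup>+x. ennreal (f x) \<partial>count_space UNIV) = 1" by simp
  then have "pmf (embed_pmf f) x = f x" for x using pmf_embed_pmf[of f x] nn by blast
  then show ?thesis unfolding f_def by blast
qed

locale lev_mean = idem_mean +
  fixes U :: "nat set set"
  assumes U_uf: "ufilter U"
    and U_cof: "\<And>N. {n. N \<le> n} \<in> U"
    and m_add: "\<And>f g. bdd f \<Longrightarrow> bdd g \<Longrightarrow> m (\<lambda>x. f x + g x) = m f + m g"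
    and m_smult: "\<And>f a. bdd f \<Longrightarrow> m (\<lambda>x. a * f x) = a * m f"
    and m_mono: "\<And>f g. bdd f \<Longrightarrow> bdd g \<Longrightarrow> (\<And>x. f x \<le> g x) \<Longrightarrow> m f \<le> m g"
    and m_one: "m (\<lambda>x. 1) = 1"
    and m_lev: "\<And>A. A \<in> U \<Longrightarrow> m (\<lambda>t. if card_T t \<in> A then 1 else 0) = 1"
begin

lemma bdd_add: "bdd f \<Longrightarrow> bdd g \<Longrightarrow> bdd (\<lambda>x. f x + g x)"
  unfolding bdd_def by (metis abs_triangle_ineq add_mono order_trans)

lemma bdd_mult: "bdd f \<Longrightarrow> bdd g \<Longrightarrow> bdd (\<lambda>x. f x * g x)"
proof -
  assume "bdd f" "bdd g"
  then obtain A B where A: "\<forall>x. \<bar>f x\<bar> \<le> A" and B: "\<forall>x. \<bar>g x\<bar> \<le> B" unfolding bdd_def by blast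
  have "\<bar>f x * g x\<bar> \<le> A * B" for x
    unfolding abs_mult by (rule mult_mono) (use A B in \<open>auto intro: order_trans[OF abs_ge_zero]\<close>)
  then show ?thesis unfolding bdd_def by blast
qed

lemma bdd_const: "bdd (\<lambda>x. c)"
  unfolding bdd_def by blast

lemma bdd_ind: "bdd (\<lambda>x. if P x then 1 else 0)"
  unfolding bdd_def by (rule exI[of _ 1]) auto

lemma bdd_sum: "finite I \<Longrightarrow> (\<And>i. i \<in> I \<Longrightarrow> bdd (f i)) \<Longrightarrow> bdd (\<lambda>x. \<Sum>i\<in>I. f i x)"
proof (induction I rule: finite_induct)
  case empty then show ?case by (simp add: bdd_const)
next
  case (insert a I) then show ?case by (simp add: bdd_add)
qed

lemma m_sum: "finite I \<Longrightarrow> (\<And>i. i \<in> I \<Longrightarrow> bdd (f i)) \<Longrightarrow> m (\<lambda>x. \<Sum>i\<in>I. f i x) = (\<Sum>i\<in>I. m (f i))"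
proof (induction I rule: finite_induct)
  case empty
  have "m (\<lambda>x. 0 * 1) = 0 * m (\<lambda>x. 1)" by (rule m_smult) (rule bdd_const)
  then show ?case by simp
next
  case (insert a I)
  have "m (\<lambda>x. \<Sum>i\<in>insert a I. f i x) = m (\<lambda>x. f a x + (\<Sum>i\<in>I. f i x))"
    using insert.hyps by simp
  also have "\<dots> = m (f a) + m (\<lambda>x. \<Sum>i\<in>I. f i x)"
  proof (rule m_add)
    show "bdd (f a)" using insert.prems by simp
    show "bdd (\<lambda>x. \<Sum>i\<in>I. f i x)" by (rule bdd_sum[OF insert.hyps(1)]) (use insert.prems in simp)
  qed
  also have "\<dots> = m (f a) + (\<Sum>i\<in>I. m (f i))" using insert.IH insert.prems by simp
  finally show ?case using insert.hyps by simp
qed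

lemma m_cong_le: "bdd f \<Longrightarrow> bdd g \<Longrightarrow> (\<And>x. f x \<le> g x) \<Longrightarrow> m f \<le> m g"
  by (rule m_mono)

lemma m_const: "m (\<lambda>x. c) = c"
  using m_smult[of "\<lambda>x. 1" c] m_one bdd_const by simp

lemma SLA:
  fixes F :: "(T \<Rightarrow> real) set" and \<delta> :: real and N :: nat
  assumes finF: "finite F" and bF: "\<And>\<phi> x. \<phi> \<in> F \<Longrightarrow> \<bar>\<phi> x\<bar> \<le> 1" and dpos: "0 < \<delta>"
  shows "\<exists>n \<nu>. N < n \<and> finite (set_pmf \<nu>) \<and> in_A n \<nu> \<and>
           (\<forall>\<phi>\<in>F. \<bar>(\<Sum>x\<in>set_pmf \<nu>. pmf \<nu> x * \<phi> x) - m \<phi>\<bar> < \<delta>)"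
proof -
  define \<eta> where "\<eta> = \<delta> / 2"
  have eta: "0 < \<eta>" unfolding \<eta>_def using dpos by simp
  define key where "key t = restrict (\<lambda>\<phi>. \<lfloor>\<phi> t / \<eta>\<rfloor>) F" for t
  define M :: int where "M = \<lceil>1 / \<eta>\<rceil> + 1"
  define K where "K = range key"
  have KPi: "K \<subseteq> (\<Pi>\<^sub>E \<phi>\<in>F. {-M..M})"
  proof
    fix \<kappa> assume "\<kappa> \<in> K"
    then obtain t where t: "\<kappa> = key t" unfolding K_def by blast
    have "\<lfloor>\<phi> t / \<eta>\<rfloor> \<in> {-M..M}" if "\<phi> \<in> F" for \<phi>
    proof -
      have b: "\<bar>\<phi> t\<bar> \<le> 1" using bF that by blast
      define y where "y = \<phi> t / \<eta>"
      have "\<bar>y\<bar> = \<bar>\<phi> t\<bar> / \<eta>" unfolding y_def using eta by (simp add: abs_divide)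
      also have "\<dots> \<le> 1 / \<eta>" by (rule divide_right_mono[OF b]) (use eta in simp)
      finally have y1: "- (1 / \<eta>) \<le> y" "y \<le> 1 / \<eta>" by linarith+
      have c1: "1 / \<eta> \<le> of_int \<lceil>1 / \<eta>\<rceil>" by (rule le_of_int_ceiling)
      have f1: "of_int \<lfloor>y\<rfloor> \<le> y" "y < of_int \<lfloor>y\<rfloor> + 1" by linarith+
      have mm: "real_of_int M = of_int \<lceil>1 / \<eta>\<rceil> + 1" unfolding M_def by simp
      have "real_of_int (- M) \<le> of_int \<lfloor>y\<rfloor>" "real_of_int \<lfloor>y\<rfloor> \<le> of_int M"
        using y1 c1 f1 mm by linarith+
      then have "- M \<le> \<lfloor>y\<rfloor>" "\<lfloor>y\<rfloor> \<le> M" by linarith+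
      then show ?thesis unfolding y_def by simp
    qed
    then show "\<kappa> \<in> (\<Pi>\<^sub>E \<phi>\<in>F. {-M..M})" unfolding t key_def restrict_PiE_iff by blast
  qed
  have finK: "finite K" by (rule finite_subset[OF KPi finite_PiE]) (use finF in auto)
  define chi where "chi \<kappa> t = (if key t = \<kappa> then 1 else (0::real))" for \<kappa> t
  define p where "p \<kappa> = m (chi \<kappa>)" for \<kappa>
  have bchi: "bdd (chi \<kappa>)" for \<kappa> unfolding chi_def by (rule bdd_ind)
  have p_nn: "0 \<le> p \<kappa>" for \<kappa>
  proof -
    have "m (\<lambda>x. 0) \<le> m (chi \<kappa>)" by (rule m_mono) (auto simp: bdd_const bchi chi_def)
    then show ?thesis unfolding p_def using m_const[of 0] by simp
  qed
  have chisum: "(\<Sum>\<kappa>\<in>K. chi \<kappa> t) = 1" for t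
  proof -
    have "(\<Sum>\<kappa>\<in>K. chi \<kappa> t) = (\<Sum>\<kappa>\<in>K. if \<kappa> = key t then 1 else 0)"
      by (rule sum.cong) (auto simp: chi_def)
    also have "\<dots> = 1" using finK by (simp add: K_def)
    finally show ?thesis .
  qed
  have psum: "(\<Sum>\<kappa>\<in>K. p \<kappa>) = 1"
  proof -
    have "(\<Sum>\<kappa>\<in>K. p \<kappa>) = m (\<lambda>t. \<Sum>\<kappa>\<in>K. chi \<kappa> t)" unfolding p_def by (rule m_sum[symmetric, OF finK bchi])
    also have "\<dots> = 1" using chisum m_one by simp
    finally show ?thesis .
  qed
  define G where "G = {\<kappa>\<in>K. 0 < p \<kappa>}"
  have finG: "finite G" unfolding G_def using finK by simp
  have pGK: "(\<Sum>\<kappa>\<in>G. p \<kappa>) = (\<Sum>\<kappa>\<in>K. p \<kappa>)"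
    by (rule sum.mono_neutral_left) (use finK p_nn in \<open>auto simp: G_def less_le\<close>)
  define L where "L \<kappa> = {n. \<exists>t. card_T t = n \<and> key t = \<kappa>}" for \<kappa>
  have LU: "L \<kappa> \<in> U" if "\<kappa> \<in> G" for \<kappa>
  proof (rule ccontr)
    assume "L \<kappa> \<notin> U"
    then have cU: "- L \<kappa> \<in> U" using uf_ultra[OF U_uf] by blast
    define ind where "ind t = (if card_T t \<in> - L \<kappa> then 1 else (0::real))" for t
    have i1: "m ind = 1" unfolding ind_def by (rule m_lev[OF cU])
    have "chi \<kappa> t \<le> 1 + (-1) * ind t" for t
      unfolding chi_def ind_def L_def by auto
    moreover have bi: "bdd ind" unfolding ind_def by (rule bdd_ind)
    moreover have b1: "bdd (\<lambda>t. (-1) * ind t)" by (rule bdd_mult[OF bdd_const bi])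
    ultimately have "m (chi \<kappa>) \<le> m (\<lambda>t. 1 + (-1) * ind t)"
      using m_mono[OF bchi bdd_add[OF bdd_const b1]] by blast
    also have "\<dots> = m (\<lambda>t. 1) + m (\<lambda>t. (-1) * ind t)"
      by (rule m_add[OF bdd_const b1])
    also have "\<dots> = 0" using i1 m_one m_smult[OF bi, of "-1"] by simp
    finally show False using that unfolding G_def p_def by simp
  qed
  define W where "W = insert {n. Suc N \<le> n} (L ` G)"
  have "\<Inter>W \<in> U" unfolding W_def
    by (rule ufilter_Inter[OF U_uf]) (use finG LU U_cof in auto)
  then have "\<Inter>W \<noteq> {}" using uf_empty[OF U_uf] by metis
  then obtain n where n: "n \<in> \<Inter>W" by (meson ex_in_conv)
  have nN: "N < n" using n unfolding W_def by simp
  have nL: "n \<in> L \<kappa>" if "\<kappa> \<in> G" for \<kappa> using n that unfolding W_def by blast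
  define tk where "tk \<kappa> = (SOME t. card_T t = n \<and> key t = \<kappa>)" for \<kappa>
  have tk: "card_T (tk \<kappa>) = n \<and> key (tk \<kappa>) = \<kappa>" if "\<kappa> \<in> G" for \<kappa>
  proof -
    have "\<exists>t. card_T t = n \<and> key t = \<kappa>" using nL[OF that] unfolding L_def by simp
    then show ?thesis unfolding tk_def by (rule someI_ex)
  qed
  have injtk: "inj_on tk G" by (rule inj_on_inverseI[where g=key]) (use tk in blast)
  define w where "w t = p (key t)" for t
  have wsum: "sum w (tk ` G) = 1"
  proof -
    have "sum w (tk ` G) = (\<Sum>\<kappa>\<in>G. p \<kappa>)"
      by (subst sum.reindex[OF injtk]) (auto simp: w_def tk intro!: sum.cong)
    also have "\<dots> = (\<Sum>\<kappa>\<in>K. p \<kappa>)"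
      by (rule sum.mono_neutral_left) (use finK p_nn in \<open>auto simp: G_def less_le\<close>)
    finally show ?thesis using psum by simp
  qed
  obtain \<nu> where \<nu>: "\<And>t. pmf \<nu> t = (if t \<in> tk ` G then w t else 0)"
    using finite_pmf_exists[of "tk ` G" w] finG wsum p_nn unfolding w_def by blast
  have setnu: "set_pmf \<nu> = tk ` G"
  proof -
    have "w t \<noteq> 0" if "t \<in> tk ` G" for t
      using that tk unfolding w_def G_def by force
    then show ?thesis unfolding set_pmf_eq using \<nu> by auto
  qed
  have finnu: "finite (set_pmf \<nu>)" unfolding setnu using finG by simp
  have inA: "in_A n \<nu>" unfolding in_A_def setnu using tk by auto
  have approx: "\<bar>(\<Sum>x\<in>set_pmf \<nu>. pmf \<nu> x * \<phi> x) - m \<phi>\<bar> < \<delta>" if phiF: "\<phi> \<in> F" for \<phi>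
  proof -
    have bphi: "bdd \<phi>" unfolding bdd_def using bF[OF phiF] by blast
    have bcp: "bdd (\<lambda>t. chi \<kappa> t * \<phi> t)" for \<kappa> by (rule bdd_mult[OF bchi bphi])
    have s1: "(\<Sum>x\<in>set_pmf \<nu>. pmf \<nu> x * \<phi> x) = (\<Sum>\<kappa>\<in>G. p \<kappa> * \<phi> (tk \<kappa>))"
      unfolding setnu by (subst sum.reindex[OF injtk]) (auto simp: \<nu> w_def tk intro!: sum.cong)
    have "m \<phi> = m (\<lambda>t. \<Sum>\<kappa>\<in>K. chi \<kappa> t * \<phi> t)"
      by (simp add: sum_distrib_right[symmetric] chisum)
    also have "\<dots> = (\<Sum>\<kappa>\<in>K. m (\<lambda>t. chi \<kappa> t * \<phi> t))" by (rule m_sum[OF finK bcp])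
    finally have s2: "m \<phi> = (\<Sum>\<kappa>\<in>K. m (\<lambda>t. chi \<kappa> t * \<phi> t))" .
    have z: "m (\<lambda>t. chi \<kappa> t * \<phi> t) = 0" if "\<kappa> \<in> K - G" for \<kappa>
    proof -
      have p0: "p \<kappa> = 0" using that p_nn[of \<kappa>] unfolding G_def by auto
      have "m (\<lambda>t. chi \<kappa> t * \<phi> t) \<le> m (chi \<kappa>)"
        by (rule m_mono[OF bcp bchi]) (use bF[OF phiF] in \<open>auto simp: chi_def abs_le_iff\<close>)
      moreover have "m (\<lambda>t. (-1) * chi \<kappa> t) \<le> m (\<lambda>t. chi \<kappa> t * \<phi> t)"
        by (rule m_mono[OF bdd_mult[OF bdd_const bchi] bcp]) (use bF[OF phiF] in \<open>auto simp: chi_def abs_le_iff\<close>)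
      moreover have "m (\<lambda>t. (-1) * chi \<kappa> t) = - m (chi \<kappa>)" using m_smult[OF bchi, of "-1"] by simp
      ultimately show ?thesis using p0 unfolding p_def by simp
    qed
    have s3: "m \<phi> = (\<Sum>\<kappa>\<in>G. m (\<lambda>t. chi \<kappa> t * \<phi> t))"
      unfolding s2 by (rule sum.mono_neutral_right) (use finK z in \<open>auto simp: G_def\<close>)
    have cell: "\<bar>p \<kappa> * \<phi> (tk \<kappa>) - m (\<lambda>t. chi \<kappa> t * \<phi> t)\<bar> \<le> \<eta> * p \<kappa>" if kG: "\<kappa> \<in> G" for \<kappa>
    proof -
      define a where "a = real_of_int (\<kappa> \<phi>)"
      have fl: "a * \<eta> \<le> \<phi> t \<and> \<phi> t \<le> (a + 1) * \<eta>" if "key t = \<kappa>" for t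
      proof -
        have "\<kappa> \<phi> = \<lfloor>\<phi> t / \<eta>\<rfloor>" using that phiF unfolding key_def by auto
        then have "a \<le> \<phi> t / \<eta>" "\<phi> t / \<eta> \<le> a + 1" unfolding a_def by linarith+
        then show ?thesis using eta by (simp add: pos_divide_le_eq pos_le_divide_eq)
      qed
      have lo: "m (\<lambda>t. (a * \<eta>) * chi \<kappa> t) \<le> m (\<lambda>t. chi \<kappa> t * \<phi> t)"
        by (rule m_mono[OF bdd_mult[OF bdd_const bchi] bcp]) (use fl in \<open>auto simp: chi_def\<close>)
      have hi: "m (\<lambda>t. chi \<kappa> t * \<phi> t) \<le> m (\<lambda>t. ((a + 1) * \<eta>) * chi \<kappa> t)"
        by (rule m_mono[OF bcp bdd_mult[OF bdd_const bchi]]) (use fl in \<open>auto simp: chi_def\<close>)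
      have e1: "m (\<lambda>t. (a * \<eta>) * chi \<kappa> t) = a * \<eta> * p \<kappa>" unfolding p_def by (rule m_smult[OF bchi])
      have e2: "m (\<lambda>t. ((a + 1) * \<eta>) * chi \<kappa> t) = (a + 1) * \<eta> * p \<kappa>" unfolding p_def by (rule m_smult[OF bchi])
      have ft: "a * \<eta> \<le> \<phi> (tk \<kappa>)" "\<phi> (tk \<kappa>) \<le> (a + 1) * \<eta>" using fl tk[OF kG] by auto
      have pp: "0 \<le> p \<kappa>" by (rule p_nn)
      have "a * \<eta> * p \<kappa> \<le> \<phi> (tk \<kappa>) * p \<kappa>" using ft pp by (simp add: mult_right_mono)
      moreover have "\<phi> (tk \<kappa>) * p \<kappa> \<le> (a + 1) * \<eta> * p \<kappa>" using ft pp by (simp add: mult_right_mono)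
      ultimately show ?thesis using lo hi e1 e2 by (simp add: algebra_simps abs_le_iff)
    qed
    have "\<bar>(\<Sum>x\<in>set_pmf \<nu>. pmf \<nu> x * \<phi> x) - m \<phi>\<bar> = \<bar>\<Sum>\<kappa>\<in>G. (p \<kappa> * \<phi> (tk \<kappa>) - m (\<lambda>t. chi \<kappa> t * \<phi> t))\<bar>"
      unfolding s1 s3 by (simp add: sum_subtractf)
    also have "\<dots> \<le> (\<Sum>\<kappa>\<in>G. \<bar>p \<kappa> * \<phi> (tk \<kappa>) - m (\<lambda>t. chi \<kappa> t * \<phi> t)\<bar>)" by (rule sum_abs)
    also have "\<dots> \<le> (\<Sum>\<kappa>\<in>G. \<eta> * p \<kappa>)" by (rule sum_mono) (rule cell)
    also have "\<dots> = \<eta> * (\<Sum>\<kappa>\<in>K. p \<kappa>)"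
      by (simp add: sum_distrib_left[symmetric] pGK)
    also have "\<dots> < \<delta>" using psum eta unfolding \<eta>_def by simp
    finally show ?thesis .
  qed
  show ?thesis using nN finnu inA approx by blast
qed

end


lemma finite_card_T: "finite {t. card_T t \<le> n}"
proof (induction n)
  case 0
  have "{t. card_T t \<le> 0} = {}" using card_T_pos by (metis (mono_tags) Collect_empty_eq le_zero_eq not_one_le_zero)
  then show ?case by (metis finite.emptyI)
next
  case (Suc n)
  have "{t. card_T t \<le> Suc n} \<subseteq> insert One ((\<lambda>(a, b). Hat a b) ` ({t. card_T t \<le> n} \<times> {t. card_T t \<le> n}))"
  proof
    fix t assume t: "t \<in> {t. card_T t \<le> Suc n}"
    show "t \<in> insert One ((\<lambda>(a, b). Hat a b) ` ({t. card_T t \<le> n} \<times> {t. card_T t \<le> n}))"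
    proof (cases t)
      case One then show ?thesis by simp
    next
      case (Hat a b)
      have "1 \<le> card_T a" "1 \<le> card_T b" by (rule card_T_pos)+
      then have "card_T a \<le> n" "card_T b \<le> n" using t Hat by auto
      then show ?thesis using Hat by force
    qed
  qed
  moreover have "finite (insert One ((\<lambda>(a, b). Hat a b) ` ({t. card_T t \<le> n} \<times> {t. card_T t \<le> n})))"
    using Suc by simp
  ultimately show ?case by (rule finite_subset)
qed

lemma geom_sum: "(\<Sum>i<M. e / 2 ^ (i + 2)) = e / 2 - e / 2 ^ (M + 1)" for e :: real
  by (induction M) (auto simp: field_simps)

context lev_mean
begin

context
  fixes c :: "T \<Rightarrow> real" and \<epsilon> :: real
  assumes c01: "\<And>t. 0 \<le> c t \<and> c t \<le> 1" and epos: "0 < \<epsilon>"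
begin

definition W :: "T \<Rightarrow> T list \<Rightarrow> real" where
  "W s ys = ev s (map dlt ys @ replicate (card_T s - length ys) m) c"

definition Test :: "nat \<Rightarrow> T pmf list \<Rightarrow> (T \<Rightarrow> real) set" where
  "Test i prev = (\<lambda>(s, xs). (\<lambda>x. W s (xs @ [x]))) `
     {(s, xs). card_T s \<le> i + 2 \<and> length xs < card_T s \<and> set xs \<subseteq> (\<Union>\<nu>\<in>set prev. set_pmf \<nu>)}"

definition dl :: "nat \<Rightarrow> real" where
  "dl i = \<epsilon> / 2 ^ (i + 2)"

definition good :: "nat \<Rightarrow> T pmf list \<Rightarrow> T pmf \<Rightarrow> bool" where
  "good i prev \<nu> \<longleftrightarrow> finite (set_pmf \<nu>) \<and>
     (\<exists>n. in_A n \<nu> \<and> (\<forall>\<nu>'\<in>set prev. \<forall>t\<in>set_pmf \<nu>'. card_T t < n)) \<and>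
     (\<forall>\<phi>\<in>Test i prev. \<bar>(\<Sum>x\<in>set_pmf \<nu>. pmf \<nu> x * \<phi> x) - m \<phi>\<bar> < dl i)"

lemma bdd_c: "bdd c"
  unfolding bdd_def using c01 by (metis abs_of_nonneg)

lemma W_bound: "length ys \<le> card_T s \<Longrightarrow> \<bar>W s ys\<bar> \<le> 1"
  unfolding W_def by (rule ev_bound) (use mean_list c01 in \<open>auto simp: abs_le_iff intro: order_trans\<close>)

lemma finite_Test:
  assumes "\<forall>\<nu>\<in>set prev. finite (set_pmf \<nu>)"
  shows "finite (Test i prev)"
proof -
  define A where "A = (\<Union>\<nu>\<in>set prev. set_pmf \<nu>)"
  have fA: "finite A" unfolding A_def using assms by simp
  have "{(s, xs). card_T s \<le> i + 2 \<and> length xs < card_T s \<and> set xs \<subseteq> A}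
        \<subseteq> {t. card_T t \<le> i + 2} \<times> {xs. set xs \<subseteq> A \<and> length xs \<le> i + 2}" by auto
  moreover have "finite ({t. card_T t \<le> i + 2} \<times> {xs. set xs \<subseteq> A \<and> length xs \<le> i + 2})"
    using finite_card_T finite_lists_length_le[OF fA] by blast
  ultimately have "finite {(s, xs). card_T s \<le> i + 2 \<and> length xs < card_T s \<and> set xs \<subseteq> A}"
    by (rule finite_subset)
  then show ?thesis unfolding Test_def A_def by simp
qed

lemma ex_good:
  assumes "\<forall>\<nu>\<in>set prev. finite (set_pmf \<nu>)"
  shows "\<exists>\<nu>. good i prev \<nu>"
proof -
  define N where "N = Max (insert 0 (card_T ` (\<Union>\<nu>\<in>set prev. set_pmf \<nu>)))"
  have fin: "finite (insert 0 (card_T ` (\<Union>\<nu>\<in>set prev. set_pmf \<nu>)))" using assms by simp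
  have bT: "\<bar>\<phi> x\<bar> \<le> 1" if "\<phi> \<in> Test i prev" for \<phi> x
  proof -
    from that obtain p where p: "p \<in> {(s, xs). card_T s \<le> i + 2 \<and> length xs < card_T s \<and> set xs \<subseteq> (\<Union>\<nu>\<in>set prev. set_pmf \<nu>)}"
      "\<phi> = (\<lambda>(s, xs). (\<lambda>x. W s (xs @ [x]))) p" unfolding Test_def by (rule imageE)
    obtain s xs where "p = (s, xs)" by (cases p)
    then have "\<phi> = (\<lambda>x. W s (xs @ [x]))" "length xs < card_T s" using p by auto
    then show ?thesis using W_bound[of "xs @ [x]" s] by simp
  qed
  have dpos: "0 < dl i" unfolding dl_def using epos by simp
  obtain n \<nu> where n: "N < n" "finite (set_pmf \<nu>)" "in_A n \<nu>"
    "\<forall>\<phi>\<in>Test i prev. \<bar>(\<Sum>x\<in>set_pmf \<nu>. pmf \<nu> x * \<phi> x) - m \<phi>\<bar> < dl i"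
  proof -
    have "\<exists>n \<nu>. N < n \<and> finite (set_pmf \<nu>) \<and> in_A n \<nu> \<and>
           (\<forall>\<phi>\<in>Test i prev. \<bar>(\<Sum>x\<in>set_pmf \<nu>. pmf \<nu> x * \<phi> x) - m \<phi>\<bar> < dl i)"
    proof (rule SLA)
      show "finite (Test i prev)" by (rule finite_Test[OF assms])
      show "\<bar>\<phi> x\<bar> \<le> 1" if "\<phi> \<in> Test i prev" for \<phi> x using bT[OF that] .
    qed (rule dpos)
    then show ?thesis using that by blast
  qed
  have "card_T t < n" if "\<nu>' \<in> set prev" "t \<in> set_pmf \<nu>'" for \<nu>' t
  proof -
    have "card_T t \<le> N" unfolding N_def by (rule Max_ge[OF fin]) (use that in blast)
    then show ?thesis using n(1) by simp
  qed
  then show ?thesis unfolding good_def using n by blast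
qed

fun hist :: "nat \<Rightarrow> T pmf list" where
  "hist 0 = []"
| "hist (Suc i) = hist i @ [SOME \<nu>. good i (hist i) \<nu>]"

definition mu :: "nat \<Rightarrow> T pmf" where
  "mu i = (SOME \<nu>. good i (hist i) \<nu>)"

lemma good_fin: "good i prev \<nu> \<Longrightarrow> finite (set_pmf \<nu>)"
  unfolding good_def by blast

lemma good_lev: "good i prev \<nu> \<Longrightarrow> \<exists>n. in_A n \<nu> \<and> (\<forall>\<nu>'\<in>set prev. \<forall>t\<in>set_pmf \<nu>'. card_T t < n)"
  unfolding good_def by blast

lemma good_approx: "good i prev \<nu> \<Longrightarrow> \<phi> \<in> Test i prev \<Longrightarrow> \<bar>(\<Sum>x\<in>set_pmf \<nu>. pmf \<nu> x * \<phi> x) - m \<phi>\<bar> < dl i"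
  unfolding good_def by blast

lemma some_card: "in_A n \<nu> \<Longrightarrow> card_T (SOME t. t \<in> set_pmf \<nu>) = n"
proof -
  assume "in_A n \<nu>"
  moreover have "(SOME t. t \<in> set_pmf \<nu>) \<in> set_pmf \<nu>" using set_pmf_not_empty[of \<nu>] by (simp add: some_in_eq)
  ultimately show ?thesis unfolding in_A_def by blast
qed

lemma hist_fin: "\<forall>\<nu>\<in>set (hist i). finite (set_pmf \<nu>)"
proof (induction i)
  case 0 then show ?case by simp
next
  case (Suc i)
  have "good i (hist i) (SOME \<nu>. good i (hist i) \<nu>)" using ex_good[OF Suc] by (rule someI_ex)
  then have "finite (set_pmf (SOME \<nu>. good i (hist i) \<nu>))" by (rule good_fin)
  then show ?case using Suc by simp
qed

lemma mu_good: "good i (hist i) (mu i)"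
  unfolding mu_def using ex_good[OF hist_fin] by (rule someI_ex)

lemma hist_eq: "hist i = map mu [0..<i]"
  by (induction i) (simp_all add: mu_def)

lemma mu_fin: "finite (set_pmf (mu i))"
  using mu_good by (rule good_fin)

definition lv :: "nat \<Rightarrow> nat" where
  "lv i = card_T (SOME t. t \<in> set_pmf (mu i))"

lemma lv_inA: "in_A (lv i) (mu i)"
proof -
  obtain n where n: "in_A n (mu i)" using good_lev[OF mu_good] by blast
  then have "lv i = n" unfolding lv_def by (rule some_card)
  then show ?thesis using n by simp
qed

lemma lv_mono: "strict_mono lv"
proof (rule strict_monoI)
  fix i j :: nat assume ij: "i < j"
  obtain n where n: "in_A n (mu j)" "\<forall>\<nu>'\<in>set (hist j). \<forall>t\<in>set_pmf \<nu>'. card_T t < n"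
    using good_lev[OF mu_good] by blast
  have "mu i \<in> set (hist j)" unfolding hist_eq using ij by simp
  moreover have "(SOME t. t \<in> set_pmf (mu i)) \<in> set_pmf (mu i)"
    using set_pmf_not_empty[of "mu i"] by (simp add: some_in_eq)
  ultimately have "lv i < n" using n(2) unfolding lv_def by blast
  moreover have "lv j = n" unfolding lv_def using n(1) by (rule some_card)
  ultimately show "lv i < lv j" by simp
qed

lemma W_points: "length ys = card_T s \<Longrightarrow> W s ys = c (subst s ys)"
  unfolding W_def by (simp add: ev_points)

lemma W_all: "W s [] = m c"
  unfolding W_def using ev_all_m[OF bdd_c] by simp

lemma W_step: "length ys < card_T s \<Longrightarrow> W s ys = m (\<lambda>x. W s (ys @ [x]))"
  unfolding W_def using ev_step[OF _ bdd_c] by simp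

lemma W_collapse: "k < card_T s \<Longrightarrow> length ys = Suc k \<Longrightarrow> W s ys = W (sub_k s k) ys"
  unfolding W_def using ev_collapse[of k s "map dlt ys", OF _ _ _ bdd_c] m_mean mean_dlt by auto

lemma main_est:
  assumes adm: "admissible t is"
  shows "\<bar>c_A c (subst_A t (map mu is)) - m c\<bar> < \<epsilon>"
proof -
  define \<nu>s where "\<nu>s = map mu is"
  define mm where "mm = card_T t"
  have len: "length is = mm" "length \<nu>s = mm" using adm unfolding admissible_def mm_def \<nu>s_def by auto
  have sw: "sorted_wrt (<) is" using adm unfolding admissible_def by blast
  have lk: "\<And>k. k < mm \<Longrightarrow> l_k k t \<le> int (is ! k)" using adm unfolding admissible_def mm_def by blast
  have fa: "fin_all (take k \<nu>s)" for k
  proof -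
    have "\<forall>\<nu>\<in>set \<nu>s. finite (set_pmf \<nu>)" unfolding \<nu>s_def using mu_fin by simp
    then show ?thesis unfolding fin_all_def by (auto dest: in_set_takeD)
  qed
  define V where "V k = Ep (take k \<nu>s) (W t)" for k
  have claim: "\<bar>V k - m c\<bar> \<le> (\<Sum>j<k. dl (is ! j))" if "k \<le> mm" for k
    using that
  proof (induction k)
    case 0 then show ?case unfolding V_def using W_all by simp
  next
    case (Suc k)
    have k: "k < mm" using Suc.prems by simp
    have tk: "take (Suc k) \<nu>s = take k \<nu>s @ [\<nu>s ! k]" using k len by (simp add: take_Suc_conv_app_nth)
    have nk: "\<nu>s ! k = mu (is ! k)" unfolding \<nu>s_def using k len by simp
    have V1: "V (Suc k) = Ep (take k \<nu>s) (\<lambda>xs. \<Sum>x\<in>set_pmf (\<nu>s ! k). pmf (\<nu>s ! k) x * W t (xs @ [x]))"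
      unfolding V_def tk by (rule Ep_snoc)
    have V2: "V k = Ep (take k \<nu>s) (\<lambda>xs. m (\<lambda>x. W t (xs @ [x])))"
      unfolding V_def
    proof (rule Ep_cong)
      fix xs assume "valid xs (take k \<nu>s)"
      then have "length xs = k" using valid_length k len by simp
      then show "W t xs = m (\<lambda>x. W t (xs @ [x]))" using W_step k unfolding mm_def by simp
    qed
    have "\<bar>V (Suc k) - V k\<bar> \<le> dl (is ! k)"
    proof -
      have "V (Suc k) - V k = Ep (take k \<nu>s) (\<lambda>xs. (\<Sum>x\<in>set_pmf (\<nu>s ! k). pmf (\<nu>s ! k) x * W t (xs @ [x])) - m (\<lambda>x. W t (xs @ [x])))"
        unfolding V1 V2 by (rule Ep_diff)
      also have "\<bar>\<dots>\<bar> \<le> dl (is ! k)"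
      proof (rule Ep_bound[OF fa], rule less_imp_le)
        fix xs assume vx: "valid xs (take k \<nu>s)"
        have lx: "length xs = k" using valid_length[OF vx] k len by simp
        define s where "s = sub_k t k"
        have phi: "(\<lambda>x. W t (xs @ [x])) = (\<lambda>x. W s (xs @ [x]))"
          unfolding s_def using W_collapse k lx unfolding mm_def by auto
        have "(\<lambda>x. W s (xs @ [x])) \<in> Test (is ! k) (hist (is ! k))"
          unfolding Test_def
        proof (rule image_eqI[where x="(s, xs)"])
          have c1: "card_T s \<le> is ! k + 2" using lk[OF k] unfolding l_k_def s_def by linarith
          have c2: "length xs < card_T s" using card_sub_k[of k t] k lx unfolding s_def mm_def by simp
          have c3: "set xs \<subseteq> (\<Union>\<nu>\<in>set (hist (is ! k)). set_pmf \<nu>)"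
          proof
            fix x assume "x \<in> set xs"
            then obtain j where j: "j < k" "x = xs ! j" using lx by (auto simp: in_set_conv_nth)
            have "x \<in> set_pmf (take k \<nu>s ! j)" using valid_nth[OF vx] j lx by simp
            then have xj: "x \<in> set_pmf (mu (is ! j))" using j k len unfolding \<nu>s_def by simp
            have "is ! j < is ! k" using sorted_wrt_nth_less[OF sw j(1)] k len by simp
            then have "mu (is ! j) \<in> set (hist (is ! k))" unfolding hist_eq by simp
            then show "x \<in> (\<Union>\<nu>\<in>set (hist (is ! k)). set_pmf \<nu>)" using xj by blast
          qed
          show "(s, xs) \<in> {(s, xs). card_T s \<le> is ! k + 2 \<and> length xs < card_T s \<and> set xs \<subseteq> (\<Union>\<nu>\<in>set (hist (is ! k)). set_pmf \<nu>)}"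
            using c1 c2 c3 by simp
        qed simp
        then have "\<bar>(\<Sum>x\<in>set_pmf (mu (is ! k)). pmf (mu (is ! k)) x * W s (xs @ [x])) - m (\<lambda>x. W s (xs @ [x]))\<bar> < dl (is ! k)"
          using good_approx[OF mu_good] by blast
        then show "\<bar>(\<Sum>x\<in>set_pmf (\<nu>s ! k). pmf (\<nu>s ! k) x * W t (xs @ [x])) - m (\<lambda>x. W t (xs @ [x]))\<bar> < dl (is ! k)"
          unfolding nk phi using fun_cong[OF phi] by simp
      qed
      finally show ?thesis .
    qed
    then show ?case using Suc.IH k by simp
  qed
  have Vmm: "V mm = c_A c (subst_A t \<nu>s)"
  proof -
    have "V mm = Ep \<nu>s (W t)" unfolding V_def using len by simp
    also have "\<dots> = Ep \<nu>s (\<lambda>xs. c (subst t xs))"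
    proof (rule Ep_cong)
      fix xs assume "valid xs \<nu>s"
      then have "length xs = card_T t" using valid_length len unfolding mm_def by simp
      then show "W t xs = c (subst t xs)" by (rule W_points)
    qed
    also have "\<dots> = c_A c (subst_A t \<nu>s)" by (rule Ep_c_A) (use fa[of mm] len in \<open>auto simp: mm_def\<close>)
    finally show ?thesis .
  qed
  have dl_nn: "0 \<le> dl i" for i unfolding dl_def using epos by simp
  have "(\<Sum>j<mm. dl (is ! j)) = sum_list (map dl is)"
    by (simp add: sum_list_sum_nth len lessThan_atLeast0)
  also have "\<dots> = sum dl (set is)" using sw by (simp add: strict_sorted_iff sum_list_distinct_conv_sum_set)
  also have "\<dots> \<le> sum dl {..<Suc (Max (insert 0 (set is)))}"
    by (rule sum_mono2) (auto simp: dl_nn le_imp_less_Suc)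
  also have "\<dots> < \<epsilon>"
  proof -
    have "0 \<le> \<epsilon> / 2 ^ (Suc (Max (insert 0 (set is))) + 1)" using epos by simp
    then show ?thesis unfolding dl_def geom_sum using epos by linarith
  qed
  finally have "(\<Sum>j<mm. dl (is ! j)) < \<epsilon>" .
  then show ?thesis using claim[of mm] Vmm unfolding \<nu>s_def by simp
qed

theorem main_T:
  "\<exists>\<mu> :: nat \<Rightarrow> T pmf. (\<exists>n :: nat \<Rightarrow> nat. strict_mono n \<and> (\<forall>i. in_A (n i) (\<mu> i))) \<and>
     (\<forall>t is. admissible t is \<longrightarrow> \<bar>c_A c (subst_A t (map \<mu> is)) - m c\<bar> < \<epsilon>)"
  using lv_mono lv_inA main_est by blast

end

end


lemma linfty_add: "f \<in> linfty S \<Longrightarrow> g \<in> linfty S \<Longrightarrow> (\<lambda>x. f x + g x) \<in> linfty S"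
proof -
  assume f: "f \<in> linfty S" and g: "g \<in> linfty S"
  obtain A where A: "\<forall>x\<in>S. \<bar>f x\<bar> \<le> A" using f unfolding linfty_def by blast
  obtain B where B: "\<forall>x\<in>S. \<bar>g x\<bar> \<le> B" using g unfolding linfty_def by blast
  have "\<forall>x\<in>S. \<bar>f x + g x\<bar> \<le> A + B" using A B by (metis abs_triangle_ineq add_mono order_trans)
  moreover have "\<forall>x. x \<notin> S \<longrightarrow> f x + g x = 0" using f g unfolding linfty_def by simp
  ultimately show ?thesis unfolding linfty_def by blast
qed

lemma linfty_smult: "f \<in> linfty S \<Longrightarrow> (\<lambda>x. a * f x) \<in> linfty S"
proof -
  assume f: "f \<in> linfty S"
  obtain A where A: "\<forall>x\<in>S. \<bar>f x\<bar> \<le> A" using f unfolding linfty_def by blast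
  have "\<forall>x\<in>S. \<bar>a * f x\<bar> \<le> \<bar>a\<bar> * A" using A by (simp add: abs_mult mult_left_mono)
  moreover have "\<forall>x. x \<notin> S \<longrightarrow> a * f x = 0" using f unfolding linfty_def by simp
  ultimately show ?thesis unfolding linfty_def by blast
qed

lemma linfty_ind: "(\<lambda>x. if x \<in> S then 1 else 0) \<in> linfty S"
  unfolding linfty_def by (rule CollectI, rule conjI, rule exI[of _ 1]) auto

lemma linfty_bound: "f \<in> linfty S \<Longrightarrow> \<exists>B. \<forall>x\<in>S. \<bar>f x\<bar> \<le> B"
  unfolding linfty_def by blast

lemma linfty_out: "f \<in> linfty S \<Longrightarrow> x \<notin> S \<Longrightarrow> f x = 0"
  unfolding linfty_def by blast

lemma linftyI: "(\<And>x. x \<in> S \<Longrightarrow> \<bar>f x\<bar> \<le> B) \<Longrightarrow> (\<And>x. x \<notin> S \<Longrightarrow> f x = 0) \<Longrightarrow> f \<in> linfty S"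
  unfolding linfty_def by blast

context
  fixes \<phi> and S :: "'a set"
  assumes P: "\<phi> \<in> PrS S"
begin

lemma prs_add: "f \<in> linfty S \<Longrightarrow> g \<in> linfty S \<Longrightarrow> \<phi> (\<lambda>x. f x + g x) = \<phi> f + \<phi> g"
  using P unfolding PrS_def by blast
lemma prs_smult: "f \<in> linfty S \<Longrightarrow> \<phi> (\<lambda>x. a * f x) = a * \<phi> f"
  using P unfolding PrS_def by blast
lemma prs_pos: "f \<in> linfty S \<Longrightarrow> (\<And>x. x \<in> S \<Longrightarrow> 0 \<le> f x) \<Longrightarrow> 0 \<le> \<phi> f"
  using P unfolding PrS_def by blast
lemma prs_one: "\<phi> (\<lambda>x. if x \<in> S then 1 else 0) = 1"
  using P unfolding PrS_def by blast
lemma prs_out: "f \<notin> linfty S \<Longrightarrow> \<phi> f = 0"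
  using P unfolding PrS_def by blast

lemma prs_mono: "f \<in> linfty S \<Longrightarrow> g \<in> linfty S \<Longrightarrow> (\<And>x. x \<in> S \<Longrightarrow> f x \<le> g x) \<Longrightarrow> \<phi> f \<le> \<phi> g"
proof -
  assume f: "f \<in> linfty S" and g: "g \<in> linfty S" and le: "\<And>x. x \<in> S \<Longrightarrow> f x \<le> g x"
  have mf: "(\<lambda>x. (-1) * f x) \<in> linfty S" by (rule linfty_smult[OF f])
  have "0 \<le> \<phi> (\<lambda>x. g x + (-1) * f x)"
    by (rule prs_pos[OF linfty_add[OF g mf]]) (use le in simp)
  also have "\<phi> (\<lambda>x. g x + (-1) * f x) = \<phi> g + \<phi> (\<lambda>x. (-1) * f x)" by (rule prs_add[OF g mf])
  also have "\<phi> (\<lambda>x. (-1) * f x) = - \<phi> f" using prs_smult[OF f, of "-1"] by simp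
  finally show ?thesis by simp
qed

lemma prs_const: "\<phi> (\<lambda>x. if x \<in> S then B else 0) = B"
proof -
  have "\<phi> (\<lambda>x. B * (if x \<in> S then 1 else 0)) = B * \<phi> (\<lambda>x. if x \<in> S then 1 else 0)"
    by (rule prs_smult[OF linfty_ind])
  moreover have "(\<lambda>x. B * (if x \<in> S then 1 else 0)) = (\<lambda>x. if x \<in> S then B else 0)" by auto
  ultimately show ?thesis using prs_one by simp
qed

lemma prs_bound: "f \<in> linfty S \<Longrightarrow> (\<And>x. x \<in> S \<Longrightarrow> \<bar>f x\<bar> \<le> B) \<Longrightarrow> \<bar>\<phi> f\<bar> \<le> B"
proof -
  assume f: "f \<in> linfty S" and b: "\<And>x. x \<in> S \<Longrightarrow> \<bar>f x\<bar> \<le> B"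
  have c: "(\<lambda>x. if x \<in> S then c else 0) \<in> linfty S" for c
    using linfty_smult[OF linfty_ind, of c] by (simp add: if_distrib cong: if_cong)
  have "\<phi> f \<le> \<phi> (\<lambda>x. if x \<in> S then B else 0)"
    by (rule prs_mono[OF f c]) (use b in \<open>auto simp: abs_le_iff\<close>)
  moreover have "\<phi> (\<lambda>x. if x \<in> S then - B else 0) \<le> \<phi> f"
  proof (rule prs_mono[OF c f])
    fix x assume "x \<in> S" then show "(if x \<in> S then - B else 0) \<le> f x" using b[of x] by (simp add: abs_le_iff)
  qed
  ultimately show ?thesis using prs_const[of B] prs_const[of "-B"] by simp
qed

end


lemma closed_imp_const: "closed {x. R x} \<Longrightarrow> closed {x. Q \<longrightarrow> R x}"
  by (cases Q) auto

lemma cont_eval: "continuous_on UNIV (\<lambda>\<phi>::('a \<Rightarrow> real) \<Rightarrow> real. \<phi> f)"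
  by (rule continuous_on_product_coordinates)

lemma closed_PrS: "closed (PrS S)"
  unfolding PrS_def Ball_def
  by (intro closed_Collect_conj closed_Collect_all closed_imp_const closed_Collect_eq closed_Collect_le
        continuous_on_add continuous_on_mult_left continuous_on_const cont_eval)

locale emb =
  fixes e :: "T \<Rightarrow> 'a" and U :: "nat set set"
  assumes inj_e: "inj e"
    and U_uf: "ufilter U" and U_cof: "\<And>N. {n. N \<le> n} \<in> U" and U_idem: "uplus U U = U"
begin

abbreviation SS where "SS \<equiv> range e"

definition op :: "'a \<Rightarrow> 'a \<Rightarrow> 'a" where
  "op x y = e (Hat (inv e x) (inv e y))"

definition lift :: "(T \<Rightarrow> real) \<Rightarrow> 'a \<Rightarrow> real" where
  "lift g = (\<lambda>a. if a \<in> SS then g (inv e a) else 0)"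

lemma lift_e[simp]: "lift g (e t) = g t"
  unfolding lift_def using inj_e by simp

lemma lift_out: "a \<notin> SS \<Longrightarrow> lift g a = 0"
  unfolding lift_def by simp

lemma op_e[simp]: "op (e x) (e y) = e (Hat x y)"
  unfolding op_def using inj_e by simp

lemma op_closed: "\<forall>x\<in>SS. \<forall>y\<in>SS. op x y \<in> SS"
  unfolding op_def by blast

lemma lift_linfty: "bdd g \<Longrightarrow> lift g \<in> linfty SS"
proof -
  assume "bdd g"
  then obtain B where B: "\<forall>x. \<bar>g x\<bar> \<le> B" unfolding bdd_def by blast
  show ?thesis by (rule linftyI[where B=B]) (use B in \<open>auto simp: lift_def\<close>)
qed

lemma lift_add: "lift (\<lambda>x. f x + g x) = (\<lambda>a. lift f a + lift g a)"
  unfolding lift_def by auto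

lemma lift_smult: "lift (\<lambda>x. c * f x) = (\<lambda>a. c * lift f a)"
  unfolding lift_def by auto

lemma lift_one: "lift (\<lambda>x. 1) = (\<lambda>a. if a \<in> SS then 1 else 0)"
  unfolding lift_def by auto

definition lev :: "nat set \<Rightarrow> 'a \<Rightarrow> real" where
  "lev A = lift (\<lambda>t. if card_T t \<in> A then 1 else 0)"

lemma lev_linfty: "lev A \<in> linfty SS"
  unfolding lev_def by (rule lift_linfty) (simp add: bdd_def, rule exI[of _ 1], simp)

definition CC :: "(('a \<Rightarrow> real) \<Rightarrow> real) set" where
  "CC = {\<phi>. \<phi> \<in> PrS SS \<and> (\<forall>A. A \<in> U \<longrightarrow> \<phi> (lev A) = 1)}"

lemma closed_CC: "closed CC"
  unfolding CC_def
  by (intro closed_Collect_conj closed_Collect_all closed_imp_const closed_Collect_eq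
        continuous_on_const cont_eval) (use closed_PrS in simp)

lemma lev_compl: "(\<lambda>a. lev B a + lev (- B) a) = (\<lambda>a. if a \<in> SS then 1 else 0)"
  unfolding lev_def lift_def by auto

lemma CC_lev: "\<phi> \<in> CC \<Longrightarrow> \<phi> (lev B) = (if B \<in> U then 1 else 0)"
proof -
  assume "\<phi> \<in> CC"
  then have P: "\<phi> \<in> PrS SS" and L: "\<And>A. A \<in> U \<Longrightarrow> \<phi> (lev A) = 1" unfolding CC_def by auto
  show ?thesis
  proof (cases "B \<in> U")
    case True then show ?thesis using L by simp
  next
    case False
    then have "- B \<in> U" using uf_ultra[OF U_uf] by blast
    then have "\<phi> (lev (- B)) = 1" by (rule L)
    moreover have "\<phi> (lev B) + \<phi> (lev (- B)) = 1"
      using prs_add[OF P lev_linfty lev_linfty, of B "- B"] prs_one[OF P] lev_compl[of B] by simp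
    ultimately show ?thesis using False by simp
  qed
qed

definition inner :: "'a \<Rightarrow> ('a \<Rightarrow> real) \<Rightarrow> 'a \<Rightarrow> real" where
  "inner x f = (\<lambda>y. if y \<in> SS then f (op x y) else 0)"

definition HH :: "(('a \<Rightarrow> real) \<Rightarrow> real) \<Rightarrow> ('a \<Rightarrow> real) \<Rightarrow> 'a \<Rightarrow> real" where
  "HH \<nu> f = (\<lambda>x. if x \<in> SS then \<nu> (inner x f) else 0)"

lemma conv_eq: "conv op SS \<mu> \<nu> f = (if f \<in> linfty SS then \<mu> (HH \<nu> f) else 0)"
  unfolding conv_def HH_def inner_def by simp

lemma inner_linfty: "f \<in> linfty SS \<Longrightarrow> x \<in> SS \<Longrightarrow> inner x f \<in> linfty SS"
proof -
  assume f: "f \<in> linfty SS" and x: "x \<in> SS"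
  obtain B where B: "\<forall>z\<in>SS. \<bar>f z\<bar> \<le> B" using linfty_bound[OF f] by blast
  show ?thesis by (rule linftyI[where B=B]) (use B x op_closed in \<open>auto simp: inner_def\<close>)
qed

lemma HH_linfty: "\<nu> \<in> PrS SS \<Longrightarrow> f \<in> linfty SS \<Longrightarrow> HH \<nu> f \<in> linfty SS"
proof -
  assume P: "\<nu> \<in> PrS SS" and f: "f \<in> linfty SS"
  obtain B where B: "\<forall>z\<in>SS. \<bar>f z\<bar> \<le> B" using linfty_bound[OF f] by blast
  have "\<bar>\<nu> (inner x f)\<bar> \<le> B" if "x \<in> SS" for x
    by (rule prs_bound[OF P inner_linfty[OF f that]]) (use B that op_closed in \<open>auto simp: inner_def\<close>)
  then show ?thesis by (intro linftyI[where B=B]) (auto simp: HH_def)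
qed

lemma inner_add: "inner x (\<lambda>z. f z + g z) = (\<lambda>y. inner x f y + inner x g y)"
  unfolding inner_def by auto
lemma inner_smult: "inner x (\<lambda>z. a * f z) = (\<lambda>y. a * inner x f y)"
  unfolding inner_def by auto

lemma conv_PrS:
  assumes M: "\<mu> \<in> PrS SS" and N: "\<nu> \<in> PrS SS"
  shows "conv op SS \<mu> \<nu> \<in> PrS SS"
proof -
  have Hadd: "HH \<nu> (\<lambda>z. f z + g z) = (\<lambda>x. HH \<nu> f x + HH \<nu> g x)" if "f \<in> linfty SS" "g \<in> linfty SS" for f g
    unfolding HH_def inner_add using prs_add[OF N inner_linfty[OF that(1)] inner_linfty[OF that(2)]] by auto
  have Hsm: "HH \<nu> (\<lambda>z. a * f z) = (\<lambda>x. a * HH \<nu> f x)" if "f \<in> linfty SS" for f a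
    unfolding HH_def inner_smult using prs_smult[OF N inner_linfty[OF that]] by auto
  have Hone: "HH \<nu> (\<lambda>x. if x \<in> SS then 1 else 0) = (\<lambda>x. if x \<in> SS then 1 else 0)"
  proof -
    have "inner x (\<lambda>x. if x \<in> SS then 1 else 0) = (\<lambda>x. if x \<in> SS then 1 else 0)" if x: "x \<in> SS" for x
    proof
      fix y
      have "op x y \<in> SS" if "y \<in> SS" using op_closed x that by blast
      then show "inner x (\<lambda>x. if x \<in> SS then 1 else 0) y = (if y \<in> SS then 1 else 0)"
        unfolding inner_def by auto
    qed
    then show ?thesis unfolding HH_def using prs_one[OF N] by auto
  qed
  show ?thesis
    unfolding PrS_def
  proof (intro CollectI conjI ballI allI impI)
    fix f g assume f: "f \<in> linfty SS" and g: "g \<in> linfty SS"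
    show "conv op SS \<mu> \<nu> (\<lambda>x. f x + g x) = conv op SS \<mu> \<nu> f + conv op SS \<mu> \<nu> g"
      unfolding conv_eq using f g linfty_add[OF f g] Hadd[OF f g] prs_add[OF M HH_linfty[OF N f] HH_linfty[OF N g]] by simp
  next
    fix a f assume f: "f \<in> linfty SS"
    show "conv op SS \<mu> \<nu> (\<lambda>x. a * f x) = a * conv op SS \<mu> \<nu> f"
      unfolding conv_eq using f linfty_smult[OF f] Hsm[OF f] prs_smult[OF M HH_linfty[OF N f]] by simp
  next
    fix f assume f: "f \<in> linfty SS" and pos: "\<forall>x\<in>SS. 0 \<le> f x"
    have "0 \<le> \<mu> (HH \<nu> f)"
    proof (rule prs_pos[OF M HH_linfty[OF N f]])
      fix x assume x: "x \<in> SS"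
      have "0 \<le> \<nu> (inner x f)"
        by (rule prs_pos[OF N inner_linfty[OF f x]]) (use pos x op_closed in \<open>auto simp: inner_def\<close>)
      then show "0 \<le> HH \<nu> f x" unfolding HH_def by simp
    qed
    then show "0 \<le> conv op SS \<mu> \<nu> f" unfolding conv_eq using f by simp
  next
    show "conv op SS \<mu> \<nu> (\<lambda>x. if x \<in> SS then 1 else 0) = 1"
      unfolding conv_eq Hone using linfty_ind prs_one[OF M] by simp
  next
    fix f assume "f \<notin> linfty SS"
    then show "conv op SS \<mu> \<nu> f = 0" unfolding conv_eq by simp
  qed
qed

lemma conv_CC:
  assumes M: "\<mu> \<in> CC" and N: "\<nu> \<in> CC"
  shows "conv op SS \<mu> \<nu> \<in> CC"
proof -
  have MP: "\<mu> \<in> PrS SS" and NP: "\<nu> \<in> PrS SS" using M N unfolding CC_def by auto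
  have "conv op SS \<mu> \<nu> (lev A) = 1" if A: "A \<in> U" for A
  proof -
    define B where "B = {n. {k. n + k \<in> A} \<in> U}"
    have BU: "B \<in> U" using A U_idem unfolding B_def by (metis uplus_iff)
    have inn: "inner x (lev A) = lev {k. card_T (inv e x) + k \<in> A}" if x: "x \<in> SS" for x
    proof
      fix y
      show "inner x (lev A) y = lev {k. card_T (inv e x) + k \<in> A} y"
      proof (cases "y \<in> SS")
        case True
        then obtain y' where y': "y = e y'" by blast
        obtain x' where x': "x = e x'" using x by blast
        show ?thesis unfolding inner_def lev_def using True inj_e by (simp add: x' y')
      next
        case False then show ?thesis unfolding inner_def lev_def lift_def by simp
      qed
    qed
    have "HH \<nu> (lev A) = lev B"
    proof
      fix x
      show "HH \<nu> (lev A) x = lev B x"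
      proof (cases "x \<in> SS")
        case True
        then obtain x' where x': "x = e x'" by blast
        have "HH \<nu> (lev A) x = \<nu> (lev {k. card_T x' + k \<in> A})"
          unfolding HH_def using True inn[OF True] inj_e x' by simp
        also have "\<dots> = (if {k. card_T x' + k \<in> A} \<in> U then 1 else 0)" by (rule CC_lev[OF N])
        also have "\<dots> = lev B x" unfolding lev_def B_def x' by simp
        finally show ?thesis .
      next
        case False then show ?thesis unfolding HH_def lev_def lift_def by simp
      qed
    qed
    then show ?thesis unfolding conv_eq using lev_linfty CC_lev[OF M, of B] BU by simp
  qed
  then show ?thesis unfolding CC_def using conv_PrS[OF MP NP] by blast
qed

lemma convex_CC: "convex_fun_set CC"
  unfolding convex_fun_set_def
proof (intro ballI allI impI)
  fix \<mu> \<nu> and u :: real assume M: "\<mu> \<in> CC" and N: "\<nu> \<in> CC" and u: "0 \<le> u \<and> u \<le> 1"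
  have MP: "\<mu> \<in> PrS SS" and NP: "\<nu> \<in> PrS SS" using M N unfolding CC_def by auto
  have "(\<lambda>f. u * \<mu> f + (1 - u) * \<nu> f) \<in> PrS SS"
    unfolding PrS_def
  proof (intro CollectI conjI ballI allI impI)
    fix f g assume f: "f \<in> linfty SS" and g: "g \<in> linfty SS"
    show "u * \<mu> (\<lambda>x. f x + g x) + (1 - u) * \<nu> (\<lambda>x. f x + g x) = u * \<mu> f + (1 - u) * \<nu> f + (u * \<mu> g + (1 - u) * \<nu> g)"
      using prs_add[OF MP f g] prs_add[OF NP f g] by (simp add: algebra_simps)
  next
    fix a f assume f: "f \<in> linfty SS"
    show "u * \<mu> (\<lambda>x. a * f x) + (1 - u) * \<nu> (\<lambda>x. a * f x) = a * (u * \<mu> f + (1 - u) * \<nu> f)"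
      using prs_smult[OF MP f] prs_smult[OF NP f] by (simp add: algebra_simps)
  next
    fix f assume f: "f \<in> linfty SS" and pos: "\<forall>x\<in>SS. 0 \<le> f x"
    have "0 \<le> \<mu> f" "0 \<le> \<nu> f" using prs_pos[OF MP f] prs_pos[OF NP f] pos by auto
    then show "0 \<le> u * \<mu> f + (1 - u) * \<nu> f" using u by simp
  next
    show "u * \<mu> (\<lambda>x. if x \<in> SS then 1 else 0) + (1 - u) * \<nu> (\<lambda>x. if x \<in> SS then 1 else 0) = 1"
      using prs_one[OF MP] prs_one[OF NP] by simp
  next
    fix f assume "f \<notin> linfty SS"
    then show "u * \<mu> f + (1 - u) * \<nu> f = 0" using prs_out[OF MP] prs_out[OF NP] by simp
  qed
  moreover have "u * \<mu> (lev A) + (1 - u) * \<nu> (lev A) = 1" if "A \<in> U" for A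
    using M N that unfolding CC_def by simp
  ultimately show "(\<lambda>f. u * \<mu> f + (1 - u) * \<nu> f) \<in> CC" unfolding CC_def by simp
qed

definition bnd :: "('a \<Rightarrow> real) \<Rightarrow> real" where
  "bnd f = (if f \<in> linfty SS then (SOME B. \<forall>x\<in>SS. \<bar>f x\<bar> \<le> B) else 0)"

lemma PrS_bnd: "\<phi> \<in> PrS SS \<Longrightarrow> \<phi> f \<in> {- bnd f .. bnd f}"
proof (cases "f \<in> linfty SS")
  case True
  assume P: "\<phi> \<in> PrS SS"
  have "\<exists>B. \<forall>x\<in>SS. \<bar>f x\<bar> \<le> B" by (rule linfty_bound[OF True])
  then have "\<forall>x\<in>SS. \<bar>f x\<bar> \<le> (SOME B. \<forall>x\<in>SS. \<bar>f x\<bar> \<le> B)" by (rule someI_ex)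
  then have "\<forall>x\<in>SS. \<bar>f x\<bar> \<le> bnd f" unfolding bnd_def using True by simp
  then have "\<bar>\<phi> f\<bar> \<le> bnd f" using prs_bound[OF P True] by blast
  then show ?thesis by (simp add: abs_le_iff)
next
  case False
  assume P: "\<phi> \<in> PrS SS"
  then show ?thesis using prs_out[OF P False] unfolding bnd_def using False by simp
qed

lemma compact_CC: "compact CC"
proof -
  have "compactin (product_topology (\<lambda>f. euclidean) UNIV) (PiE UNIV (\<lambda>f. {- bnd f .. bnd f}))"
    unfolding compactin_PiE by simp
  then have K: "compact (Pi UNIV (\<lambda>f. {- bnd f .. bnd f}))"
    unfolding euclidean_product_topology PiE_UNIV_domain compactin_euclidean_iff .
  have "CC \<subseteq> Pi UNIV (\<lambda>f. {- bnd f .. bnd f})" unfolding CC_def using PrS_bnd by blast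
  then have "CC = Pi UNIV (\<lambda>f. {- bnd f .. bnd f}) \<inter> CC" by blast
  then show ?thesis using compact_Int_closed[OF K closed_CC] by simp
qed

end


fun comb :: "nat \<Rightarrow> T" where
  "comb 0 = One"
| "comb (Suc k) = Hat (comb k) One"

lemma card_comb: "card_T (comb k) = Suc k"
  by (induction k) auto

definition tr :: "nat \<Rightarrow> T" where
  "tr n = comb (n - 1)"

lemma card_tr: "1 \<le> n \<Longrightarrow> card_T (tr n) = n"
  unfolding tr_def card_comb by simp

fun enc :: "T \<Rightarrow> nat" where
  "enc One = 0"
| "enc (Hat a b) = Suc (prod_encode (enc a, enc b))"

lemma inj_enc: "inj enc"
proof -
  have "\<forall>u. enc t = enc u \<longrightarrow> t = u" for t
  proof (induction t)
    case One
    show ?case by (intro allI, case_tac u) auto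
  next
    case (Hat a b)
    show ?case
    proof (intro allI impI)
      fix u assume eq: "enc (Hat a b) = enc u"
      show "Hat a b = u"
      proof (cases u)
        case One then show ?thesis using eq by simp
      next
        case (Hat a' b')
        then have "enc a = enc a'" "enc b = enc b'" using eq by auto
        then show ?thesis using Hat.IH Hat by blast
      qed
    qed
  qed
  then show ?thesis unfolding inj_def by blast
qed

context emb
begin

definition UF :: "nat filter" where
  "UF = Abs_filter (\<lambda>P. {n. P n} \<in> U)"

lemma eventually_UF: "eventually P UF \<longleftrightarrow> {n. P n} \<in> U"
  unfolding UF_def
proof (rule eventually_Abs_filter, unfold_locales)
  show "{n. True} \<in> U" using ufilter_UNIV[OF U_uf] by simp
next
  fix P Q assume "{n. P n} \<in> U" "{n. Q n} \<in> U"
  then have "{n. P n} \<inter> {n. Q n} \<in> U" by (rule uf_int[OF U_uf])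
  then show "{n. P n \<and> Q n} \<in> U" by (simp add: Collect_conj_eq)
next
  fix P Q assume "\<forall>x. P x \<longrightarrow> Q x" "{n. P n} \<in> U"
  then show "{n. Q n} \<in> U" using uf_mono[OF U_uf] by (metis mem_Collect_eq subsetI)
qed

lemma UF_nt: "\<not> trivial_limit UF"
  unfolding trivial_limit_def eventually_UF using uf_empty[OF U_uf] by simp

lemma ulim_ex:
  fixes s :: "nat \<Rightarrow> real"
  assumes B: "\<And>n. \<bar>s n\<bar> \<le> B"
  shows "\<exists>L. (s \<longlongrightarrow> L) UF"
proof -
  define Q where "Q = {r. {n. r \<le> s n} \<in> U}"
  have Qne: "Q \<noteq> {}"
  proof -
    have "- B \<le> s n" for n using B[of n] by (simp add: abs_le_iff)
    then have "{n. - B \<le> s n} = UNIV" by auto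
    then have "- B \<in> Q" unfolding Q_def using ufilter_UNIV[OF U_uf] by simp
    then show ?thesis by blast
  qed
  have Qb: "r \<le> B" if "r \<in> Q" for r
  proof (rule ccontr)
    assume "\<not> r \<le> B"
    moreover have "s n \<le> B" for n using B[of n] by (simp add: abs_le_iff)
    ultimately have "{n. r \<le> s n} = {}" by (auto simp: not_le) (meson less_le_trans not_le)
    then show False using that uf_empty[OF U_uf] unfolding Q_def by simp
  qed
  have bQ: "bdd_above Q" unfolding bdd_above_def using Qb by blast
  define L where "L = Sup Q"
  have "(s \<longlongrightarrow> L) UF"
  proof (rule tendstoI)
    fix \<epsilon> :: real assume e: "0 < \<epsilon>"
    have "L - \<epsilon> < Sup Q" unfolding L_def using e by simp
    then obtain r where r: "r \<in> Q" "L - \<epsilon> < r" using less_cSup_iff[OF Qne bQ] by blast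
    have "{n. r \<le> s n} \<subseteq> {n. L - \<epsilon> < s n}" using r(2) by auto
    then have i1: "{n. L - \<epsilon> < s n} \<in> U" using r(1) uf_mono[OF U_uf] unfolding Q_def by blast
    have i2: "{n. s n < L + \<epsilon>} \<in> U"
    proof (rule ccontr)
      assume "{n. s n < L + \<epsilon>} \<notin> U"
      then have "- {n. s n < L + \<epsilon>} \<in> U" using uf_ultra[OF U_uf] by blast
      moreover have "- {n. s n < L + \<epsilon>} = {n. L + \<epsilon> \<le> s n}" by auto
      ultimately have "L + \<epsilon> \<in> Q" unfolding Q_def by simp
      then have "L + \<epsilon> \<le> L" unfolding L_def using cSup_upper[OF _ bQ] by blast
      then show False using e by simp
    qed
    have "{n. L - \<epsilon> < s n} \<inter> {n. s n < L + \<epsilon>} \<in> U" by (rule uf_int[OF U_uf i1 i2])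
    moreover have "{n. L - \<epsilon> < s n} \<inter> {n. s n < L + \<epsilon>} \<subseteq> {n. dist (s n) L < \<epsilon>}"
      by (auto simp: dist_real_def abs_less_iff)
    ultimately have "{n. dist (s n) L < \<epsilon>} \<in> U" using uf_mono[OF U_uf] by blast
    then show "eventually (\<lambda>n. dist (s n) L < \<epsilon>) UF" unfolding eventually_UF .
  qed
  then show ?thesis by blast
qed

definition Lm :: "(nat \<Rightarrow> real) \<Rightarrow> real" where
  "Lm s = Lim UF s"

lemma Lm_tendsto: "(\<And>n. \<bar>s n\<bar> \<le> B) \<Longrightarrow> (s \<longlongrightarrow> Lm s) UF"
proof -
  assume "\<And>n. \<bar>s n\<bar> \<le> B"
  then obtain L where L: "(s \<longlongrightarrow> L) UF" using ulim_ex by blast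
  then have "Lm s = L" unfolding Lm_def by (rule tendsto_Lim[OF UF_nt])
  then show ?thesis using L by simp
qed

lemma Lm_eq: "(s \<longlongrightarrow> L) UF \<Longrightarrow> Lm s = L"
  unfolding Lm_def by (rule tendsto_Lim[OF UF_nt])

definition mu0 :: "('a \<Rightarrow> real) \<Rightarrow> real" where
  "mu0 f = (if f \<in> linfty SS then Lm (\<lambda>n. f (e (tr n))) else 0)"

lemma seq_bound: "f \<in> linfty SS \<Longrightarrow> \<exists>B. \<forall>n. \<bar>f (e (tr n))\<bar> \<le> B"
  using linfty_bound by blast

lemma mu0_CC: "mu0 \<in> CC"
proof -
  have P: "mu0 \<in> PrS SS"
    unfolding PrS_def
  proof (intro CollectI conjI ballI allI impI)
    fix f g assume f: "f \<in> linfty SS" and g: "g \<in> linfty SS"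
    obtain A where A: "\<And>n. \<bar>f (e (tr n))\<bar> \<le> A" using seq_bound[OF f] by blast
    obtain B where B: "\<And>n. \<bar>g (e (tr n))\<bar> \<le> B" using seq_bound[OF g] by blast
    have "((\<lambda>n. f (e (tr n)) + g (e (tr n))) \<longlongrightarrow> Lm (\<lambda>n. f (e (tr n))) + Lm (\<lambda>n. g (e (tr n)))) UF"
      by (rule tendsto_add[OF Lm_tendsto[OF A] Lm_tendsto[OF B]])
    then show "mu0 (\<lambda>x. f x + g x) = mu0 f + mu0 g"
      unfolding mu0_def using f g linfty_add[OF f g] Lm_eq by simp
  next
    fix a f assume f: "f \<in> linfty SS"
    obtain A where A: "\<And>n. \<bar>f (e (tr n))\<bar> \<le> A" using seq_bound[OF f] by blast
    have "((\<lambda>n. a * f (e (tr n))) \<longlongrightarrow> a * Lm (\<lambda>n. f (e (tr n)))) UF"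
      by (rule tendsto_mult_left[OF Lm_tendsto[OF A]])
    then show "mu0 (\<lambda>x. a * f x) = a * mu0 f"
      unfolding mu0_def using f linfty_smult[OF f] Lm_eq by simp
  next
    fix f assume f: "f \<in> linfty SS" and pos: "\<forall>x\<in>SS. 0 \<le> f x"
    obtain A where A: "\<And>n. \<bar>f (e (tr n))\<bar> \<le> A" using seq_bound[OF f] by blast
    have "0 \<le> Lm (\<lambda>n. f (e (tr n)))"
      by (rule tendsto_lowerbound[OF Lm_tendsto[OF A] _ UF_nt]) (use pos in simp)
    then show "0 \<le> mu0 f" unfolding mu0_def using f by simp
  next
    have "((\<lambda>n. (if e (tr n) \<in> SS then 1 else 0) :: real) \<longlongrightarrow> 1) UF" by simp
    then show "mu0 (\<lambda>x. if x \<in> SS then 1 else 0) = 1" unfolding mu0_def using linfty_ind Lm_eq by simp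
  next
    fix f assume "f \<notin> linfty SS" then show "mu0 f = 0" unfolding mu0_def by simp
  qed
  have "mu0 (lev A) = 1" if A: "A \<in> U" for A
  proof -
    have "A \<inter> {n. 1 \<le> n} \<in> U" using uf_int[OF U_uf A U_cof] by simp
    moreover have "A \<inter> {n. 1 \<le> n} \<subseteq> {n. lev A (e (tr n)) = 1}" unfolding lev_def using card_tr by auto
    ultimately have "{n. lev A (e (tr n)) = 1} \<in> U" using uf_mono[OF U_uf] by blast
    then have "eventually (\<lambda>n. lev A (e (tr n)) = 1) UF" unfolding eventually_UF .
    then have "((\<lambda>n. lev A (e (tr n))) \<longlongrightarrow> 1) UF" by (rule tendsto_eventually)
    then show ?thesis unfolding mu0_def using lev_linfty Lm_eq by simp
  qed
  then show ?thesis unfolding CC_def using P by blast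
qed

lemma CC_ne: "CC \<noteq> {}"
  using mu0_CC by blast

context
  fixes \<mu> assumes MC: "\<mu> \<in> CC" and idem: "conv op SS \<mu> \<mu> = \<mu>"
begin

definition mm :: "(T \<Rightarrow> real) \<Rightarrow> real" where
  "mm g = \<mu> (lift g)"

lemma MP: "\<mu> \<in> PrS SS" using MC unfolding CC_def by blast

lemma mm_lev_mean: "lev_mean mm U"
proof -
  have mean: "mean mm"
    unfolding mean_def mm_def
  proof (intro allI impI)
    fix g :: "T \<Rightarrow> real" and B :: real assume B: "\<forall>x. \<bar>g x\<bar> \<le> B"
    have "bdd g" unfolding bdd_def using B by blast
    then show "\<bar>\<mu> (lift g)\<bar> \<le> B" by (rule prs_bound[OF MP lift_linfty]) (use B in auto)
  qed
  have idm: "mm g = mm (\<lambda>x. mm (\<lambda>y. g (Hat x y)))" if g: "bdd g" for g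
  proof -
    have "mm g = conv op SS \<mu> \<mu> (lift g)" unfolding mm_def idem ..
    also have "\<dots> = \<mu> (HH \<mu> (lift g))" unfolding conv_eq using lift_linfty[OF g] by simp
    also have "HH \<mu> (lift g) = lift (\<lambda>x. mm (\<lambda>y. g (Hat x y)))"
    proof
      fix a
      show "HH \<mu> (lift g) a = lift (\<lambda>x. mm (\<lambda>y. g (Hat x y))) a"
      proof (cases "a \<in> SS")
        case True
        then obtain x where x: "a = e x" by blast
        have "inner (e x) (lift g) = lift (\<lambda>y. g (Hat x y))"
        proof
          fix b
          show "inner (e x) (lift g) b = lift (\<lambda>y. g (Hat x y)) b"
          proof (cases "b \<in> SS")
            case True
            then obtain y where "b = e y" by blast
            then show ?thesis unfolding inner_def by simp
          next
            case False then show ?thesis unfolding inner_def lift_def by simp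
          qed
        qed
        then show ?thesis unfolding HH_def mm_def x by simp
      next
        case False then show ?thesis unfolding HH_def lift_def by simp
      qed
    qed
    finally show ?thesis unfolding mm_def .
  qed
  show ?thesis
  proof (unfold lev_mean_def lev_mean_axioms_def idem_mean_def, intro conjI allI impI)
    show "mean mm" by (rule mean)
    show "\<And>g. bdd g \<Longrightarrow> mm g = mm (\<lambda>x. mm (\<lambda>y. g (Hat x y)))" by (rule idm)
    show "ufilter U" by (rule U_uf)
    show "\<And>N. {n. N \<le> n} \<in> U" by (rule U_cof)
    show "\<And>f g. bdd f \<Longrightarrow> bdd g \<Longrightarrow> mm (\<lambda>x. f x + g x) = mm f + mm g"
      unfolding mm_def lift_add using prs_add[OF MP lift_linfty lift_linfty] by blast
    show "\<And>f a. bdd f \<Longrightarrow> mm (\<lambda>x. a * f x) = a * mm f"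
      unfolding mm_def lift_smult using prs_smult[OF MP lift_linfty] by blast
    show "\<And>f g. bdd f \<Longrightarrow> bdd g \<Longrightarrow> \<forall>x. f x \<le> g x \<Longrightarrow> mm f \<le> mm g"
    proof -
      fix f g assume f: "bdd f" and g: "bdd g" and le: "\<forall>x. f x \<le> g x"
      show "mm f \<le> mm g" unfolding mm_def
        by (rule prs_mono[OF MP lift_linfty[OF f] lift_linfty[OF g]]) (use le in \<open>auto simp: lift_def\<close>)
    qed
    show "mm (\<lambda>x. 1) = 1" unfolding mm_def lift_one by (rule prs_one[OF MP])
    show "\<And>A. A \<in> U \<Longrightarrow> mm (\<lambda>t. if card_T t \<in> A then 1 else 0) = 1"
      using MC unfolding mm_def CC_def lev_def by blast
  qed
qed

end

end

theorem theorem4p1: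
  assumes univ: "infinite (UNIV :: 'a set)"
    and H: "\<And>(S :: 'a set) (op :: 'a \<Rightarrow> 'a \<Rightarrow> 'a) C.
      (\<forall>x\<in>S. \<forall>y\<in>S. op x y \<in> S) \<Longrightarrow>
      C \<subseteq> PrS S \<Longrightarrow> C \<noteq> {} \<Longrightarrow> compact C \<Longrightarrow> convex_fun_set C \<Longrightarrow>
      (\<forall>\<mu>\<in>C. \<forall>\<nu>\<in>C. conv op S \<mu> \<nu> \<in> C) \<Longrightarrow>
      \<exists>\<mu>\<in>C. conv op S \<mu> \<mu> = \<mu>"
  shows "\<forall>c :: T \<Rightarrow> real. (\<forall>t. 0 \<le> c t \<and> c t \<le> 1) \<longrightarrow>
     (\<forall>\<epsilon>>0. \<exists>r. 0 \<le> r \<and> r \<le> 1 \<and>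
        (\<exists>\<mu> :: nat \<Rightarrow> T pmf. (\<exists>n :: nat \<Rightarrow> nat. strict_mono n \<and> (\<forall>i. in_A (n i) (\<mu> i))) \<and>
           (\<forall>t is. admissible t is \<longrightarrow> \<bar>c_A c (subst_A t (map \<mu> is)) - r\<bar> < \<epsilon>)))"
proof (intro allI impI)
  fix c :: "T \<Rightarrow> real" and \<epsilon> :: real
  assume c01: "\<forall>t. 0 \<le> c t \<and> c t \<le> 1" and epos: "0 < \<epsilon>"
  obtain f :: "nat \<Rightarrow> 'a" where f: "inj f" using infinite_countable_subset[OF univ] by blast
  define e where "e = f \<circ> enc"
  have inje: "inj e" unfolding e_def using f inj_enc by (simp add: inj_compose)
  obtain U where U: "ufilter U" "\<And>N. {n. N \<le> n} \<in> U" "uplus U U = U"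
    using idempotent_ultrafilter by blast
  interpret E: emb e U by (unfold_locales) (use inje U in auto)
  obtain \<mu> where M: "\<mu> \<in> E.CC" "conv E.op (range e) \<mu> \<mu> = \<mu>"
    using H[OF E.op_closed _ E.CC_ne E.compact_CC E.convex_CC] E.conv_CC
    unfolding E.CC_def by blast
  interpret L: lev_mean "E.mm \<mu>" U by (rule E.mm_lev_mean[OF M])
  have ex: "\<exists>\<mu>' :: nat \<Rightarrow> T pmf. (\<exists>n :: nat \<Rightarrow> nat. strict_mono n \<and> (\<forall>i. in_A (n i) (\<mu>' i))) \<and>
     (\<forall>t is. admissible t is \<longrightarrow> \<bar>c_A c (subst_A t (map \<mu>' is)) - E.mm \<mu> c\<bar> < \<epsilon>)"
    by (rule L.main_T) (use c01 epos in auto)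
  have bc: "bdd c" unfolding bdd_def using c01 by (metis abs_of_nonneg)
  have "E.mm \<mu> (\<lambda>x. 0) \<le> E.mm \<mu> c" by (rule L.m_mono[OF L.bdd_const bc]) (use c01 in auto)
  moreover have "E.mm \<mu> c \<le> E.mm \<mu> (\<lambda>x. 1)" by (rule L.m_mono[OF bc L.bdd_const]) (use c01 in auto)
  ultimately have "0 \<le> E.mm \<mu> c" "E.mm \<mu> c \<le> 1" using L.m_const by simp_all
  then show "\<exists>r. 0 \<le> r \<and> r \<le> 1 \<and>
        (\<exists>\<mu> :: nat \<Rightarrow> T pmf. (\<exists>n :: nat \<Rightarrow> nat. strict_mono n \<and> (\<forall>i. in_A (n i) (\<mu> i))) \<and>
           (\<forall>t is. admissible t is \<longrightarrow> \<bar>c_A c (subst_A t (map \<mu> is)) - r\<bar> < \<epsilon>))"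
    using ex by blast
qed


end
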